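(* Let ${\bold H}$ be a function with domain $\omega$ such that each ${\bold H}(i)$ is a countable set with at least two elements, and let $(K,\Sigma,\Sigma^\bot)$ be a semi--creating triple for ${\bold H}$ which is linked, semi--gluing and has the cutting property. Then the forcing notion $\mathbb{Q}^+_\infty(K,\Sigma,\Sigma^\bot)$ is $\sigma$-$*$--linked.
   Context: A semi--creature for ${\bold H}$ is a quadruple $t=(\mathbf{dom}[t],\mathbf{sval}[t],\mathbf{nor}[t],\mathbf{dis}[t])$ with $\mathbf{dom}[t]$ a non-empty finite subset of $\omega$, $\emptyset\neq\mathbf{sval}[t]\subseteq\prod_{i\in\mathbf{dom}[t]}{\bold H}(i)$, $\mathbf{nor}[t]\in[0,\infty)\cup\{\infty\}$, $\mathbf{dis}[t]$ hereditarily countable, and $\mathbf{sval}[t]=\prod_{i\in\mathbf{dom}[t]}{\bold H}(i)$ iff $\mathbf{nor}[t]=\infty$. A semi--composition operation $\Sigma$ on a set $K$ of semi--creatures maps finite subsets of $K$ to subsets of $K$ with: (a) if $s\in\Sigma(\mathcal S_s)$ for all $s\in\mathcal S$ then $\Sigma(\mathcal S)\subseteq\Sigma(\bigcup_s\mathcal S_s)$; (b) $t\in\Sigma(\{t\})$, $\Sigma(\emptyset)=\emptyset$; (c) if $t\in\Sigma(\mathcal S)$ then $\mathbf{dom}[t]=\bigcup_{s\in\mathcal S}\mathbf{dom}[s]$, $v\restriction\mathbf{dom}[s]\in\mathbf{sval}[s]$ for $v\in\mathbf{sval}[t]$, $s\in\mathcal S$, and distinct members of $\mathcal S$ have disjoint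 domains. A semi--decomposition operation $\Sigma^\bot$ assigns to each $t\in K$ a non-empty family of finite subsets of $K$ with: (a) if $\{s_0,\dots,s_k\}\in\Sigma^\bot(t)$ and $\mathcal S_i\in\Sigma^\bot(s_i)$ then $\bigcup_i\mathcal S_i\in\Sigma^\bot(t)$; (b) $\{t\}\in\Sigma^\bot(t)$; (c) if $\mathcal S\in\Sigma^\bot(t)$ then $\mathbf{dom}[t]=\bigcup_{s\in\mathcal S}\mathbf{dom}[s]$ and each $v\in\prod_{i\in\mathbf{dom}[t]}{\bold H}(i)$ with $v\restriction\mathbf{dom}[s]\in\mathbf{sval}[s]$ for all $s\in\mathcal S$ is in $\mathbf{sval}[t]$. $(K,\Sigma,\Sigma^\bot)$ is then a semi--creating triple. Conditions of $\mathbb{Q}^+_\infty(K,\Sigma,\Sigma^\bot)$ are sequences $p=(w^p,t^p_0,t^p_1,\dots)$ with $w^p$ a finite function, $w^p(i)\in{\bold H}(i)$, $t^p_i\in K$, $\mathrm{dom}(w^p)$ and the $\mathbf{dom}[t^p_i]$ partitioning $\omega$, $\mathbf{nor}[t^p_i]\neq\infty$ for all $i$ and $\lim_i\mathbf{nor}[t^p_i]=\infty$. $p\leq q$ ($q$ stronger) iff $q$ arises from $p$ by finitely many operations: deciding the value (for a finite $A\subseteq\omega$, extend $w$ to $w^*$ with domain $\mathrm{dom}(w)\cup\bigcup_{i\in A}\mathbf{dom}[t_i]$, $w^*\restriction\mathbf{dom}[t_i]\in\mathbf{sval}[t_i]$ for $i\in A$, and keep exactly the $t_i$, $i\notin A$);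 applying $\Sigma$ (replace the sequence by $t^*_i\in\Sigma(\{t_j:j\in A_i\})$ for pairwise disjoint finite $A_i\subseteq\omega$); applying $\Sigma^\bot$ (new sequence $t^*_j$ with pairwise disjoint non-empty finite $A_i$ and $\{t^*_j:j\in A_i\}\in\Sigma^\bot(t_i)$); results of operations must be conditions. The triple is linked if for all $t_0,t_1\in K$ with $\mathbf{nor}[t_0],\mathbf{nor}[t_1]>1$ and $\mathbf{dom}[t_0]=\mathbf{dom}[t_1]$ there is $s\in\Sigma(\{t_0\})\cap\Sigma(\{t_1\})$ with $\mathbf{nor}[s]\geq\min\{\mathbf{nor}[t_0],\mathbf{nor}[t_1]\}-1$. It is semi--gluing if for all $t_0,\dots,t_n\in K$ with pairwise disjoint domains there is $s\in\Sigma(\{t_0,\dots,t_n\})$ with $\mathbf{nor}[s]\geq\min_k\mathbf{nor}[t_k]-1$. It has the cutting property if for every $t\in K$ with $\mathbf{nor}[t]>1$ and every non-empty proper subset $z$ of $\mathbf{dom}[t]$ there are $s_0,s_1\in K$ with $\mathbf{dom}[s_0]=z$, $\mathbf{dom}[s_1]=\mathbf{dom}[t]\setminus z$, $\mathbf{nor}[s_\ell]\geq\mathbf{nor}[t]-1$ ($\ell=0,1$) and $\{s_0,s_1\}\in\Sigma^\bot(t)$. A forcing notion $\mathbb{Q}$ is $\sigma$-$*$--linked if for every $n\in\omega$ there is a partition $\langle A_i:i\in\omega\rangle$ of $\mathbb{Q}$ such that any $q_0,\dots,q_n$ lying in one $A_i$ have a common upper bound in $\mathbb{Q}$. *)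

theory Defs
  imports Main "HOL-Library.FuncSet" "HOL-Library.Countable_Set" "HOL-Library.Extended_Real"
begin

text \<open>Values live in a type 'a (H i :: 'a set);
  the ``dis'' component lives in a type 'd (HC sets are coded by elements of 'd).\<close>

record ('a, 'd) screature =
  sdom :: "nat set"
  sval :: "(nat \<Rightarrow> 'a) set"
  snor :: ereal
  sdis :: 'd

definition semi_creature :: "(nat \<Rightarrow> 'a set) \<Rightarrow> ('a, 'd) screature \<Rightarrow> bool" where
  "semi_creature H t \<longleftrightarrow>
     sdom t \<noteq> {} \<and> finite (sdom t) \<and>
     sval t \<noteq> {} \<and> sval t \<subseteq> PiE (sdom t) H \<and>
     snor t \<ge> 0 \<and>
     (sval t = PiE (sdom t) H \<longleftrightarrow> snor t = \<infinity>)"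

definition semi_composition ::
  "(nat \<Rightarrow> 'a set) \<Rightarrow> ('a, 'd) screature set \<Rightarrow>
   (('a, 'd) screature set \<Rightarrow> ('a, 'd) screature set) \<Rightarrow> bool" where
  "semi_composition H K Sig \<longleftrightarrow>
     (\<forall>S. finite S \<and> S \<subseteq> K \<longrightarrow> Sig S \<subseteq> K) \<and>
     (\<forall>S F. finite S \<and> S \<subseteq> K \<and> (\<forall>s\<in>S. finite (F s) \<and> F s \<subseteq> K \<and> s \<in> Sig (F s))
        \<longrightarrow> Sig S \<subseteq> Sig (\<Union>s\<in>S. F s)) \<and>
     (\<forall>t\<in>K. t \<in> Sig {t}) \<and> Sig {} = {} \<and>
     (\<forall>S t. finite S \<and> S \<subseteq> K \<and> t \<in> Sig S \<longrightarrow>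
        sdom t = (\<Union>s\<in>S. sdom s) \<and>
        (\<forall>v\<in>sval t. \<forall>s\<in>S. restrict v (sdom s) \<in> sval s) \<and>
        (\<forall>s\<in>S. \<forall>s'\<in>S. s \<noteq> s' \<longrightarrow> sdom s \<inter> sdom s' = {}))"

definition semi_decomposition ::
  "(nat \<Rightarrow> 'a set) \<Rightarrow> ('a, 'd) screature set \<Rightarrow>
   (('a, 'd) screature \<Rightarrow> ('a, 'd) screature set set) \<Rightarrow> bool" where
  "semi_decomposition H K Sigb \<longleftrightarrow>
     (\<forall>t\<in>K. Sigb t \<noteq> {} \<and> (\<forall>S\<in>Sigb t. finite S \<and> S \<subseteq> K)) \<and>
     (\<forall>t\<in>K. \<forall>S\<in>Sigb t. \<forall>F. (\<forall>s\<in>S. F s \<in> Sigb s) \<longrightarrow> (\<Union>s\<in>S. F s) \<in> Sigb t) \<and>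
     (\<forall>t\<in>K. {t} \<in> Sigb t) \<and>
     (\<forall>t\<in>K. \<forall>S\<in>Sigb t.
        sdom t = (\<Union>s\<in>S. sdom s) \<and>
        (\<forall>v\<in>PiE (sdom t) H. (\<forall>s\<in>S. restrict v (sdom s) \<in> sval s) \<longrightarrow> v \<in> sval t))"

definition semi_creating_triple ::
  "(nat \<Rightarrow> 'a set) \<Rightarrow> ('a, 'd) screature set \<Rightarrow>
   (('a, 'd) screature set \<Rightarrow> ('a, 'd) screature set) \<Rightarrow>
   (('a, 'd) screature \<Rightarrow> ('a, 'd) screature set set) \<Rightarrow> bool" where
  "semi_creating_triple H K Sig Sigb \<longleftrightarrow>
     (\<forall>t\<in>K. semi_creature H t) \<and> semi_composition H K Sig \<and> semi_decomposition H K Sigb"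

definition linked_triple ::
  "('a, 'd) screature set \<Rightarrow> (('a, 'd) screature set \<Rightarrow> ('a, 'd) screature set) \<Rightarrow> bool" where
  "linked_triple K Sig \<longleftrightarrow>
     (\<forall>t0\<in>K. \<forall>t1\<in>K. snor t0 > 1 \<and> snor t1 > 1 \<and> sdom t0 = sdom t1 \<longrightarrow>
        (\<exists>s\<in>Sig {t0} \<inter> Sig {t1}. snor s \<ge> min (snor t0) (snor t1) - 1))"

definition semi_gluing ::
  "('a, 'd) screature set \<Rightarrow> (('a, 'd) screature set \<Rightarrow> ('a, 'd) screature set) \<Rightarrow> bool" where
  "semi_gluing K Sig \<longleftrightarrow>
     (\<forall>n::nat. \<forall>ts::nat \<Rightarrow> ('a, 'd) screature.
        (\<forall>k\<le>n. ts k \<in> K) \<and>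
        (\<forall>k\<le>n. \<forall>l\<le>n. k \<noteq> l \<longrightarrow> sdom (ts k) \<inter> sdom (ts l) = {}) \<longrightarrow>
        (\<exists>s\<in>Sig (ts ` {..n}). snor s \<ge> (MIN k\<in>{..n}. snor (ts k)) - 1))"

definition cutting_property ::
  "('a, 'd) screature set \<Rightarrow> (('a, 'd) screature \<Rightarrow> ('a, 'd) screature set set) \<Rightarrow> bool" where
  "cutting_property K Sigb \<longleftrightarrow>
     (\<forall>t\<in>K. snor t > 1 \<longrightarrow>
        (\<forall>z. z \<noteq> {} \<and> z \<subset> sdom t \<longrightarrow>
          (\<exists>s0\<in>K. \<exists>s1\<in>K. sdom s0 = z \<and> sdom s1 = sdom t - z \<and>
             snor s0 \<ge> snor t - 1 \<and> snor s1 \<ge> snor t - 1 \<and> {s0, s1} \<in> Sigb t)))"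

type_synonym ('a, 'd) qcond = "(nat \<rightharpoonup> 'a) \<times> (nat \<Rightarrow> ('a, 'd) screature)"

definition is_cond :: "(nat \<Rightarrow> 'a set) \<Rightarrow> ('a, 'd) screature set \<Rightarrow> ('a, 'd) qcond \<Rightarrow> bool" where
  "is_cond H K p \<longleftrightarrow> (case p of (w, t) \<Rightarrow>
     finite (dom w) \<and> (\<forall>i\<in>dom w. the (w i) \<in> H i) \<and>
     (\<forall>i. t i \<in> K) \<and>
     (\<forall>i. dom w \<inter> sdom (t i) = {}) \<and>
     (\<forall>i j. i \<noteq> j \<longrightarrow> sdom (t i) \<inter> sdom (t j) = {}) \<and>
     dom w \<union> (\<Union>i. sdom (t i)) = UNIV \<and>
     (\<forall>i. snor (t i) \<noteq> \<infinity>) \<and>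
     ((\<lambda>i. snor (t i)) \<longlonglongrightarrow> \<infinity>))"

text \<open>Deciding the value: the remaining creatures t_i, i not in A, are kept in their order.\<close>
definition decide_step :: "('a, 'd) qcond \<Rightarrow> ('a, 'd) qcond \<Rightarrow> bool" where
  "decide_step p q \<longleftrightarrow> (case p of (w, t) \<Rightarrow> case q of (w', t') \<Rightarrow>
     (\<exists>A. finite A \<and> w \<subseteq>\<^sub>m w' \<and>
        dom w' = dom w \<union> (\<Union>i\<in>A. sdom (t i)) \<and>
        (\<forall>i\<in>A. restrict (\<lambda>k. the (w' k)) (sdom (t i)) \<in> sval (t i)) \<and>
        (\<exists>f. strict_mono f \<and> range f = UNIV - A \<and> t' = t \<circ> f)))"

definition sigma_step ::
  "(('a, 'd) screature set \<Rightarrow> ('a, 'd) screature set) \<Rightarrow> ('a, 'd) qcond \<Rightarrow> ('a, 'd) qcond \<Rightarrow> bool" where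
  "sigma_step Sig p q \<longleftrightarrow> (case p of (w, t) \<Rightarrow> case q of (w', t') \<Rightarrow>
     w' = w \<and>
     (\<exists>A :: nat \<Rightarrow> nat set. (\<forall>i. finite (A i)) \<and>
        (\<forall>i j. i \<noteq> j \<longrightarrow> A i \<inter> A j = {}) \<and>
        (\<forall>i. t' i \<in> Sig (t ` A i))))"

definition sigmabot_step ::
  "(('a, 'd) screature \<Rightarrow> ('a, 'd) screature set set) \<Rightarrow> ('a, 'd) qcond \<Rightarrow> ('a, 'd) qcond \<Rightarrow> bool" where
  "sigmabot_step Sigb p q \<longleftrightarrow> (case p of (w, t) \<Rightarrow> case q of (w', t') \<Rightarrow>
     w' = w \<and>
     (\<exists>A :: nat \<Rightarrow> nat set. (\<forall>i. finite (A i) \<and> A i \<noteq> {}) \<and>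
        (\<forall>i j. i \<noteq> j \<longrightarrow> A i \<inter> A j = {}) \<and>
        (\<forall>i. t' ` A i \<in> Sigb (t i))))"

definition op_step ::
  "(nat \<Rightarrow> 'a set) \<Rightarrow> ('a, 'd) screature set \<Rightarrow>
   (('a, 'd) screature set \<Rightarrow> ('a, 'd) screature set) \<Rightarrow>
   (('a, 'd) screature \<Rightarrow> ('a, 'd) screature set set) \<Rightarrow>
   ('a, 'd) qcond \<Rightarrow> ('a, 'd) qcond \<Rightarrow> bool" where
  "op_step H K Sig Sigb p q \<longleftrightarrow> is_cond H K p \<and> is_cond H K q \<and>
     (decide_step p q \<or> sigma_step Sig p q \<or> sigmabot_step Sigb p q)"

text \<open>p \<le> q (q stronger): q arises from p by finitely many operations.\<close>
definition Q_le ::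
  "(nat \<Rightarrow> 'a set) \<Rightarrow> ('a, 'd) screature set \<Rightarrow>
   (('a, 'd) screature set \<Rightarrow> ('a, 'd) screature set) \<Rightarrow>
   (('a, 'd) screature \<Rightarrow> ('a, 'd) screature set set) \<Rightarrow>
   ('a, 'd) qcond \<Rightarrow> ('a, 'd) qcond \<Rightarrow> bool" where
  "Q_le H K Sig Sigb p q \<longleftrightarrow> is_cond H K p \<and> (op_step H K Sig Sigb)\<^sup>*\<^sup>* p q"

definition Q_conds :: "(nat \<Rightarrow> 'a set) \<Rightarrow> ('a, 'd) screature set \<Rightarrow> ('a, 'd) qcond set" where
  "Q_conds H K = {p. is_cond H K p}"

text \<open>sigma-*-linked forcing notion (Q, le), le p q meaning q is stronger;
  the partition <A_i : i in omega> is given by a colouring c.\<close>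
definition sigma_star_linked :: "'c set \<Rightarrow> ('c \<Rightarrow> 'c \<Rightarrow> bool) \<Rightarrow> bool" where
  "sigma_star_linked Q le \<longleftrightarrow>
     (\<forall>n::nat. \<exists>c :: 'c \<Rightarrow> nat. \<forall>q :: nat \<Rightarrow> 'c.
        (\<forall>j\<le>n. q j \<in> Q \<and> c (q j) = c (q 0)) \<longrightarrow> (\<exists>r\<in>Q. \<forall>j\<le>n. le (q j) r))"

end

theory Submission
  imports Defs
begin

locale ctx =
  fixes H :: "nat \<Rightarrow> 'a set"
    and K :: "('a, 'd) screature set"
    and Sig :: "('a, 'd) screature set \<Rightarrow> ('a, 'd) screature set"
    and Sigb :: "('a, 'd) screature \<Rightarrow> ('a, 'd) screature set set"
  assumes Hne: "\<And>i. H i \<noteq> {}"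
    and tri: "semi_creating_triple H K Sig Sigb"
    and lnk: "linked_triple K Sig"
    and glu: "semi_gluing K Sig"
    and cutp: "cutting_property K Sigb"
begin

lemma cre: "t \<in> K \<Longrightarrow> semi_creature H t"
  using tri unfolding semi_creating_triple_def by blast

lemma cre_dom: "t \<in> K \<Longrightarrow> sdom t \<noteq> {} \<and> finite (sdom t)"
  using cre unfolding semi_creature_def by blast

lemma cre_val: "t \<in> K \<Longrightarrow> sval t \<noteq> {} \<and> sval t \<subseteq> PiE (sdom t) H"
  using cre unfolding semi_creature_def by blast

lemma cre_inf: "t \<in> K \<Longrightarrow> (sval t = PiE (sdom t) H \<longleftrightarrow> snor t = \<infinity>)"
  using cre unfolding semi_creature_def by blast

lemma comp: "semi_composition H K Sig"
  using tri unfolding semi_creating_triple_def by blast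

lemma decomp: "semi_decomposition H K Sigb"
  using tri unfolding semi_creating_triple_def by blast

lemma comp_parts_1: "(\<forall>S. finite S \<and> S \<subseteq> K \<longrightarrow> Sig S \<subseteq> K)"
  using comp unfolding semi_composition_def by (elim conjE) assumption+

lemma comp_parts_2: "(\<forall>S F. finite S \<and> S \<subseteq> K \<and> (\<forall>s\<in>S. finite (F s) \<and> F s \<subseteq> K \<and> s \<in> Sig (F s))
        \<longrightarrow> Sig S \<subseteq> Sig (\<Union>s\<in>S. F s))"
  using comp unfolding semi_composition_def by (elim conjE) assumption+

lemma comp_parts_3: "(\<forall>t\<in>K. t \<in> Sig {t})"
  using comp unfolding semi_composition_def by (elim conjE) assumption+

lemma comp_parts_4: "Sig {} = {}"
  using comp unfolding semi_composition_def by (elim conjE) assumption+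

lemma comp_parts_5: "(\<forall>S t. finite S \<and> S \<subseteq> K \<and> t \<in> Sig S \<longrightarrow>
        sdom t = (\<Union>s\<in>S. sdom s) \<and>
        (\<forall>v\<in>sval t. \<forall>s\<in>S. restrict v (sdom s) \<in> sval s) \<and>
        (\<forall>s\<in>S. \<forall>s'\<in>S. s \<noteq> s' \<longrightarrow> sdom s \<inter> sdom s' = {}))"
  using comp unfolding semi_composition_def by (elim conjE) assumption+



lemma Sig_K: "finite S \<Longrightarrow> S \<subseteq> K \<Longrightarrow> Sig S \<subseteq> K"
  using comp_parts_1 by simp

lemma Sig_c: "finite S \<Longrightarrow> S \<subseteq> K \<Longrightarrow> t \<in> Sig S \<Longrightarrow>
        sdom t = (\<Union>s\<in>S. sdom s) \<and>
        (\<forall>v\<in>sval t. \<forall>s\<in>S. restrict v (sdom s) \<in> sval s) \<and>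
        (\<forall>s\<in>S. \<forall>s'\<in>S. s \<noteq> s' \<longrightarrow> sdom s \<inter> sdom s' = {})"
  using comp_parts_5 by simp

lemma Sig_dom: "finite S \<Longrightarrow> S \<subseteq> K \<Longrightarrow> t \<in> Sig S \<Longrightarrow> sdom t = (\<Union>s\<in>S. sdom s)"
  using Sig_c by simp

lemma Sig_val: "finite S \<Longrightarrow> S \<subseteq> K \<Longrightarrow> t \<in> Sig S \<Longrightarrow> v \<in> sval t \<Longrightarrow> s \<in> S
   \<Longrightarrow> restrict v (sdom s) \<in> sval s"
  using Sig_c by simp

lemma Sig_refl: "t \<in> K \<Longrightarrow> t \<in> Sig {t}"
  using comp_parts_3 by simp

lemma Sig_trans1: "s \<in> K \<Longrightarrow> u \<in> K \<Longrightarrow> s \<in> Sig {u} \<Longrightarrow> Sig {s} \<subseteq> Sig {u}"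
proof -
  assume a: "s \<in> K" "u \<in> K" "s \<in> Sig {u}"
  have A: "\<forall>S F. finite S \<and> S \<subseteq> K \<and> (\<forall>s\<in>S. finite (F s) \<and> F s \<subseteq> K \<and> s \<in> Sig (F s))
        \<longrightarrow> Sig S \<subseteq> Sig (\<Union>s\<in>S. F s)"
    using comp_parts_2 by blast
  have "Sig {s} \<subseteq> Sig (\<Union>x\<in>{s}. (\<lambda>_. {u}) x)"
    using spec[OF spec[OF A, of "{s}"], of "\<lambda>_. {u}"] a by blast
  thus ?thesis by simp
qed

lemma decomp_parts_1: "(\<forall>t\<in>K. Sigb t \<noteq> {} \<and> (\<forall>S\<in>Sigb t. finite S \<and> S \<subseteq> K))"
  using decomp unfolding semi_decomposition_def by (elim conjE) assumption+

lemma decomp_parts_2: "(\<forall>t\<in>K. \<forall>S\<in>Sigb t. \<forall>F. (\<forall>s\<in>S. F s \<in> Sigb s) \<longrightarrow> (\<Union>s\<in>S. F s) \<in> Sigb t)"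
  using decomp unfolding semi_decomposition_def by (elim conjE) assumption+

lemma decomp_parts_3: "(\<forall>t\<in>K. {t} \<in> Sigb t)"
  using decomp unfolding semi_decomposition_def by (elim conjE) assumption+

lemma decomp_parts_4: "(\<forall>t\<in>K. \<forall>S\<in>Sigb t.
        sdom t = (\<Union>s\<in>S. sdom s) \<and>
        (\<forall>v\<in>PiE (sdom t) H. (\<forall>s\<in>S. restrict v (sdom s) \<in> sval s) \<longrightarrow> v \<in> sval t))"
  using decomp unfolding semi_decomposition_def by (elim conjE) assumption+



lemma Sigb_K: "t \<in> K \<Longrightarrow> S \<in> Sigb t \<Longrightarrow> finite S \<and> S \<subseteq> K"
  using decomp_parts_1 by simp

lemma Sigb_dom: "t \<in> K \<Longrightarrow> S \<in> Sigb t \<Longrightarrow> sdom t = (\<Union>s\<in>S. sdom s)"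
  using decomp_parts_4 by simp

lemma Sigb_val: "t \<in> K \<Longrightarrow> S \<in> Sigb t \<Longrightarrow> v \<in> PiE (sdom t) H \<Longrightarrow>
   (\<And>s. s \<in> S \<Longrightarrow> restrict v (sdom s) \<in> sval s) \<Longrightarrow> v \<in> sval t"
  using decomp_parts_4 by simp

definition extf :: "nat set \<Rightarrow> (nat \<Rightarrow> 'a) \<Rightarrow> nat set \<Rightarrow> (nat \<Rightarrow> 'a) \<Rightarrow> nat \<Rightarrow> 'a" where
  "extf A x B y = (\<lambda>k. if k \<in> A then x k else if k \<in> B then y k else (SOME h. h \<in> H k))"

lemma some_H: "(SOME h. h \<in> H k) \<in> H k"
  using Hne[of k] by (simp add: some_in_eq)

lemma ext_PiE:
  assumes "x \<in> PiE A H" "y \<in> PiE B H" "A \<subseteq> D" "finite D"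
  shows "restrict (extf A x B y) D \<in> PiE D H"
proof (rule PiE_I)
  fix k assume "k \<in> D"
  have "extf A x B y k \<in> H k"
  proof -
    consider "k \<in> A" | "k \<notin> A" "k \<in> B" | "k \<notin> A" "k \<notin> B" by blast
    thus ?thesis
    proof cases
      case 1 thus ?thesis using assms(1) unfolding extf_def by (simp add: PiE_mem)
    next
      case 2 thus ?thesis using assms(2) unfolding extf_def by (simp add: PiE_mem)
    next
      case 3 thus ?thesis using some_H[of k] unfolding extf_def by simp
    qed
  qed
  thus "restrict (extf A x B y) D k \<in> H k" using \<open>k \<in> D\<close> by simp
qed simp

lemma ext_restrA:
  assumes "x \<in> PiE A H" "A \<subseteq> D"
  shows "restrict (restrict (extf A x B y) D) A = x"
proof (rule ext)
  fix k show "restrict (restrict (extf A x B y) D) A k = x k"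
  proof (cases "k \<in> A")
    case True
    hence "k \<in> D" using assms(2) by blast
    thus ?thesis using True by (simp add: extf_def)
  next
    case False
    hence "x k = undefined" using assms(1) by (intro PiE_arb)
    thus ?thesis using False by simp
  qed
qed

lemma ext_restrB:
  assumes "y \<in> PiE B H" "B \<subseteq> D" "A \<inter> B = {}"
  shows "restrict (restrict (extf A x B y) D) B = y"
proof (rule ext)
  fix k show "restrict (restrict (extf A x B y) D) B k = y k"
  proof (cases "k \<in> B")
    case True
    hence "k \<in> D" "k \<notin> A" using assms(2,3) by blast+
    thus ?thesis using True by (simp add: extf_def)
  next
    case False
    hence "y k = undefined" using assms(1) by (intro PiE_arb)
    thus ?thesis using False by simp
  qed
qed

lemma comp_finite:
  assumes S: "finite S" "S \<subseteq> K" and g: "g \<in> Sig S" and c: "c \<in> S" "snor c \<noteq> \<infinity>"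
  shows "snor g \<noteq> \<infinity>"
proof
  assume inf: "snor g = \<infinity>"
  have gK: "g \<in> K" using Sig_K S g by blast
  have cK: "c \<in> K" using S c by blast
  have dg: "sdom c \<subseteq> sdom g" using Sig_dom[OF S g] c by blast
  have fg: "finite (sdom g)" using cre_dom gK by blast
  have sg: "sval g = PiE (sdom g) H" using cre_inf gK inf by blast
  have "PiE (sdom c) H \<subseteq> sval c"
  proof
    fix x assume x: "x \<in> PiE (sdom c) H"
    define v where "v = restrict (extf (sdom c) x (sdom c) x) (sdom g)"
    have "v \<in> sval g" using ext_PiE[OF x x _ fg] dg sg unfolding v_def by auto
    hence "restrict v (sdom c) \<in> sval c" using Sig_val[OF S g] c by blast
    thus "x \<in> sval c" using ext_restrA[OF x dg] unfolding v_def by simp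
  qed
  hence "sval c = PiE (sdom c) H" using cre_val cK by blast
  thus False using cre_inf cK c by blast
qed

end

lemma ereal_sub1: "ereal a \<le> (x::ereal) \<Longrightarrow> ereal (a - 1) \<le> x - 1"
  by (cases x) (auto simp: one_ereal_def)

lemma ereal_sub_real: "ereal a \<le> (x::ereal) \<Longrightarrow> ereal (a - b) \<le> x - ereal b"
  by (cases x) auto

context ctx begin

lemma restr_sub_PiE: "v \<in> PiE D H \<Longrightarrow> A \<subseteq> D \<Longrightarrow> restrict v A \<in> PiE A H"
  by (auto simp: PiE_iff)

lemma piece_finite:
  assumes gK: "g \<in> K" and cut: "{s0, s1} \<in> Sigb g" and s0K: "s0 \<in> K" and s1K: "s1 \<in> K"
    and disj: "sdom s0 \<inter> sdom s1 = {}"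
    and cK: "c \<in> K" and csub: "sdom c \<subseteq> sdom s0" and cfin: "snor c \<noteq> \<infinity>"
    and gc: "\<forall>v\<in>sval g. restrict v (sdom c) \<in> sval c"
  shows "snor s0 \<noteq> \<infinity>"
proof
  assume inf: "snor s0 = \<infinity>"
  have sv0: "sval s0 = PiE (sdom s0) H" using cre_inf s0K inf by blast
  have dg: "sdom g = sdom s0 \<union> sdom s1" using Sigb_dom[OF gK cut] by simp
  have fg: "finite (sdom g)" using cre_dom gK by blast
  obtain y where y: "y \<in> sval s1" using cre_val s1K by blast
  have yP: "y \<in> PiE (sdom s1) H" using y cre_val s1K by blast
  have cg: "sdom c \<subseteq> sdom g" using csub dg by blast
  have cs1: "sdom c \<inter> sdom s1 = {}" using csub disj by blast
  have "PiE (sdom c) H \<subseteq> sval c"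
  proof
    fix x assume x: "x \<in> PiE (sdom c) H"
    define v where "v = restrict (extf (sdom c) x (sdom s1) y) (sdom g)"
    have vP: "v \<in> PiE (sdom g) H" using ext_PiE[OF x yP cg fg] unfolding v_def .
    have sub1: "sdom s1 \<subseteq> sdom g" using dg by blast
    have sub0: "sdom s0 \<subseteq> sdom g" using dg by blast
    have r1: "restrict v (sdom s1) = y"
      unfolding v_def by (rule ext_restrB[OF yP sub1 cs1])
    have "restrict v (sdom s0) \<in> PiE (sdom s0) H" by (rule restr_sub_PiE[OF vP sub0])
    hence r0: "restrict v (sdom s0) \<in> sval s0" using sv0 by simp
    have "v \<in> sval g"
    proof (rule Sigb_val[OF gK cut vP])
      fix s assume "s \<in> {s0, s1}"
      hence "s = s0 \<or> s = s1" by simp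
      thus "restrict v (sdom s) \<in> sval s" using r0 r1 y by (elim disjE) simp_all
    qed
    hence "restrict v (sdom c) \<in> sval c" using gc by blast
    thus "x \<in> sval c" using ext_restrA[OF x cg] unfolding v_def by simp
  qed
  hence "sval c = PiE (sdom c) H" using cre_val cK by blast
  thus False using cre_inf cK cfin by blast
qed

lemma glue_set:
  assumes fin: "finite G" and ne: "G \<noteq> {}" and inK: "\<forall>i\<in>G. s i \<in> K"
    and dj: "\<forall>i\<in>G. \<forall>j\<in>G. i \<noteq> j \<longrightarrow> sdom (s i) \<inter> sdom (s j) = {}"
  shows "\<exists>g\<in>Sig (s ` G). \<forall>R. (\<forall>i\<in>G. ereal R \<le> snor (s i)) \<longrightarrow> ereal R - 1 \<le> snor g"
proof -
  obtain f where f: "bij_betw f {0..<card G} G" using ex_bij_betw_nat_finite[OF fin] by blast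
  define n where "n = card G - 1"
  have cG: "card G > 0" using fin ne by (simp add: card_gt_0_iff)
  have nn: "{..n} = {0..<card G}" unfolding n_def using cG by auto
  define ts where "ts = (\<lambda>k. s (f k))"
  have "ts ` {..n} = s ` (f ` {0..<card G})" unfolding ts_def nn by (simp add: image_image)
  hence img: "ts ` {..n} = s ` G" using f by (simp add: bij_betw_def)
  have fG: "\<And>k. k \<le> n \<Longrightarrow> f k \<in> G"
  proof -
    fix k assume "k \<le> n"
    hence "k \<in> {0..<card G}" unfolding nn[symmetric] by simp
    thus "f k \<in> G" using bij_betw_apply[OF f] by blast
  qed
  have tsK: "\<forall>k\<le>n. ts k \<in> K" unfolding ts_def using inK fG by blast
  have tsd: "\<forall>k\<le>n. \<forall>l\<le>n. k \<noteq> l \<longrightarrow> sdom (ts k) \<inter> sdom (ts l) = {}"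
  proof (intro allI impI)
    fix k l assume "k \<le> n" "l \<le> n" "k \<noteq> l"
    have kk: "k \<in> {0..<card G}" using \<open>k \<le> n\<close> unfolding nn[symmetric] by simp
    have ll: "l \<in> {0..<card G}" using \<open>l \<le> n\<close> unfolding nn[symmetric] by simp
    have "f k \<noteq> f l" using inj_on_contraD[OF bij_betw_imp_inj_on[OF f] \<open>k \<noteq> l\<close> kk ll] .
    hence "f k \<in> G" "f l \<in> G" "f k \<noteq> f l" using fG \<open>k \<le> n\<close> \<open>l \<le> n\<close> by auto
    thus "sdom (ts k) \<inter> sdom (ts l) = {}" unfolding ts_def using dj by blast
  qed
  have GL: "\<forall>n::nat. \<forall>ts::nat \<Rightarrow> ('a, 'd) screature.
        (\<forall>k\<le>n. ts k \<in> K) \<and>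
        (\<forall>k\<le>n. \<forall>l\<le>n. k \<noteq> l \<longrightarrow> sdom (ts k) \<inter> sdom (ts l) = {}) \<longrightarrow>
        (\<exists>s\<in>Sig (ts ` {..n}). snor s \<ge> (MIN k\<in>{..n}. snor (ts k)) - 1)"
    using glu unfolding semi_gluing_def .
  have "\<exists>s\<in>Sig (ts ` {..n}). snor s \<ge> (MIN k\<in>{..n}. snor (ts k)) - 1"
    using mp[OF spec[OF spec[OF GL, of n], of ts] conjI[OF tsK tsd]] .
  then obtain g where g: "g \<in> Sig (ts ` {..n})" and gn: "(MIN k\<in>{..n}. snor (ts k)) - 1 \<le> snor g"
    by blast
  show ?thesis
  proof (intro bexI[of _ g] allI impI)
    show "g \<in> Sig (s ` G)" using g img by simp
    fix R assume R: "\<forall>i\<in>G. ereal R \<le> snor (s i)"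
    have "\<forall>k\<le>n. ereal R \<le> snor (ts k)" unfolding ts_def using R fG by blast
    hence "ereal R \<le> (MIN k\<in>{..n}. snor (ts k))" by simp
    hence "ereal (R - 1) \<le> (MIN k\<in>{..n}. snor (ts k)) - 1" by (rule ereal_sub1)
    thus "ereal R - 1 \<le> snor g" using gn by (simp add: one_ereal_def)
  qed
qed

lemma link_step:
  assumes "t0 \<in> K" "t1 \<in> K" "snor t0 > 1" "snor t1 > 1" "sdom t0 = sdom t1"
  shows "\<exists>s\<in>Sig {t0} \<inter> Sig {t1}. min (snor t0) (snor t1) - 1 \<le> snor s"
  using lnk assms unfolding linked_triple_def by blast

lemma link:
  assumes "\<forall>j\<le>m. u j \<in> K \<and> sdom (u j) = D \<and> ereal R0 \<le> snor (u j)" and "R0 > real m + 1"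
  shows "\<exists>s\<in>K. sdom s = D \<and> (\<forall>j\<le>m. s \<in> Sig {u j}) \<and>
     (\<forall>R. (\<forall>j\<le>m. ereal R \<le> snor (u j)) \<longrightarrow> ereal (R - real m) \<le> snor s)"
  using assms
proof (induction m)
  case 0
  thus ?case using Sig_refl by (intro bexI[of _ "u 0"]) auto
next
  case (Suc m)
  from Suc.prems have "\<forall>j\<le>m. u j \<in> K \<and> sdom (u j) = D \<and> ereal R0 \<le> snor (u j)" "R0 > real m + 1"
    by auto
  then obtain s where sK: "s \<in> K" and sd: "sdom s = D" and sS: "\<forall>j\<le>m. s \<in> Sig {u j}"
    and sR: "\<forall>R. (\<forall>j\<le>m. ereal R \<le> snor (u j)) \<longrightarrow> ereal (R - real m) \<le> snor s"
    using Suc.IH by blast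
  have uK: "u (Suc m) \<in> K" "sdom (u (Suc m)) = D" "ereal R0 \<le> snor (u (Suc m))" using Suc.prems by auto
  have "ereal (R0 - real m) \<le> snor s" using sR Suc.prems by auto
  moreover have "ereal 1 < ereal (R0 - real m)" using Suc.prems(2) by simp
  ultimately have s1: "snor s > 1" unfolding one_ereal_def by (meson order_less_le_trans)
  have "ereal 1 < ereal R0" using Suc.prems(2) by simp
  hence u1: "snor (u (Suc m)) > 1" using uK(3) unfolding one_ereal_def by (meson order_less_le_trans)
  obtain s' where s': "s' \<in> Sig {s}" "s' \<in> Sig {u (Suc m)}"
    and s'n: "min (snor s) (snor (u (Suc m))) - 1 \<le> snor s'"
    using link_step[OF sK uK(1) s1 u1] sd uK(2) by auto
  have s'K: "s' \<in> K" using Sig_K[of "{s}"] sK s' by blast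
  have s'd: "sdom s' = D" using Sig_dom[of "{s}"] sK s' sd by auto
  show ?case
  proof (intro bexI[OF _ s'K] conjI allI impI)
    show "sdom s' = D" by (rule s'd)
    fix j assume "j \<le> Suc m"
    thus "s' \<in> Sig {u j}"
    proof (cases "j = Suc m")
      case False
      hence "j \<le> m" using \<open>j \<le> Suc m\<close> by simp
      hence "s \<in> Sig {u j}" "u j \<in> K" using sS Suc.prems by auto
      thus ?thesis using Sig_trans1[OF sK] s' by blast
    qed (use s' in simp)
  next
    fix R assume R: "\<forall>j\<le>Suc m. ereal R \<le> snor (u j)"
    have a: "ereal (R - real m) \<le> snor s" using sR R by auto
    have "ereal (R - real m) \<le> ereal R" by simp
    hence b: "ereal (R - real m) \<le> snor (u (Suc m))" using R by (meson order_trans le_refl)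
    have "ereal (R - real m) \<le> min (snor s) (snor (u (Suc m)))" using a b by simp
    hence "ereal (R - real m - 1) \<le> min (snor s) (snor (u (Suc m))) - 1" by (rule ereal_sub1)
    thus "ereal (R - real (Suc m)) \<le> snor s'" using s'n by (simp add: algebra_simps)
  qed
qed

end

lemma tend_fin: "((f::nat \<Rightarrow> ereal) \<longlonglongrightarrow> \<infinity>) \<longleftrightarrow> (\<forall>R::real. finite {i. f i \<le> ereal R})"
  by (simp add: tendsto_PInfty cofinite_eq_sequentially[symmetric] eventually_cofinite not_less)

lemma interval_ex:
  fixes f :: "nat \<Rightarrow> nat"
  assumes sm: "strict_mono f" and x: "f 0 \<le> x"
  shows "\<exists>k. f k \<le> x \<and> x < f (Suc k)"
proof -
  have ex: "\<exists>k. x < f k" using strict_mono_imp_increasing[OF sm, of "Suc x"] by (intro exI[of _ "Suc x"]) simp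
  define m where "m = (LEAST k. x < f k)"
  have m1: "x < f m" unfolding m_def using LeastI_ex[OF ex] .
  have m0: "m \<noteq> 0" using m1 x by (intro notI) simp
  then obtain k where mk: "m = Suc k" using not0_implies_Suc by blast
  have "\<not> x < f k" using not_less_Least[of k "\<lambda>k. x < f k"] mk unfolding m_def by simp
  thus ?thesis using m1 mk by (intro exI[of _ k]) simp
qed

lemma ereal_le_plus1: "(x::ereal) - 1 \<le> ereal R \<Longrightarrow> x \<le> ereal (R + 1)"
  by (cases x) (auto simp: one_ereal_def)

lemma ereal_gt_sub1: "ereal (R + 1) < (x::ereal) \<Longrightarrow> ereal R < x - 1"
  by (cases x) (auto simp: one_ereal_def)

lemma finite_div2: "finite L \<Longrightarrow> finite {m::nat. m div 2 \<in> L}"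
proof -
  assume L: "finite L"
  have "{m::nat. m div 2 \<in> L} \<subseteq> (\<lambda>k. 2 * k) ` L \<union> (\<lambda>k. 2 * k + 1) ` L"
  proof
    fix m :: nat assume "m \<in> {m. m div 2 \<in> L}"
    hence a: "m div 2 \<in> L" by simp
    have "m = 2 * (m div 2) \<or> m = 2 * (m div 2) + 1" by presburger
    thus "m \<in> (\<lambda>k. 2 * k) ` L \<union> (\<lambda>k. 2 * k + 1) ` L" using a by blast
  qed
  moreover have "finite ((\<lambda>k. 2 * k) ` L \<union> (\<lambda>k. 2 * k + 1) ` L)" using L by simp
  ultimately show ?thesis by (rule finite_subset)
qed

context ctx begin

lemma condD:
  assumes "is_cond H K (w, s)"
  shows "finite (dom w)" "\<forall>i\<in>dom w. the (w i) \<in> H i" "\<forall>i. s i \<in> K"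
    "\<forall>i. dom w \<inter> sdom (s i) = {}" "\<forall>i j. i \<noteq> j \<longrightarrow> sdom (s i) \<inter> sdom (s j) = {}"
    "dom w \<union> (\<Union>i. sdom (s i)) = UNIV" "\<forall>i. snor (s i) \<noteq> \<infinity>"
    "\<forall>R::real. finite {i. snor (s i) \<le> ereal R}"
  using assms unfolding is_cond_def tend_fin[symmetric] by simp_all

lemma condI:
  assumes "finite (dom w)" "\<forall>i\<in>dom w. the (w i) \<in> H i" "\<forall>i. s i \<in> K"
    "\<forall>i. dom w \<inter> sdom (s i) = {}" "\<forall>i j. i \<noteq> j \<longrightarrow> sdom (s i) \<inter> sdom (s j) = {}"
    "dom w \<union> (\<Union>i. sdom (s i)) = UNIV" "\<forall>i. snor (s i) \<noteq> \<infinity>"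
    "\<forall>R::real. finite {i. snor (s i) \<le> ereal R}"
  shows "is_cond H K (w, s)"
  using assms unfolding is_cond_def tend_fin[symmetric] by simp

lemma cond_cover: "is_cond H K (w, s) \<Longrightarrow> x \<notin> dom w \<Longrightarrow> \<exists>i. x \<in> sdom (s i)"
  using condD(6)[of w s] by blast

lemma cond_mn_inj:
  assumes c: "is_cond H K (w, s)"
  shows "inj (\<lambda>i. Min (sdom (s i)))"
proof (rule injI)
  fix i j assume e: "Min (sdom (s i)) = Min (sdom (s j))"
  show "i = j"
  proof (rule ccontr)
    assume "i \<noteq> j"
    hence d: "sdom (s i) \<inter> sdom (s j) = {}" using condD(5)[OF c] by blast
    have "Min (sdom (s i)) \<in> sdom (s i)" using cre_dom condD(3)[OF c] by (meson Min_in)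
    moreover have "Min (sdom (s j)) \<in> sdom (s j)" using cre_dom condD(3)[OF c] by (meson Min_in)
    ultimately show False using d e by auto
  qed
qed

lemma cond_mn_fin:
  assumes c: "is_cond H K (w, s)"
  shows "finite {i. Min (sdom (s i)) < x}"
proof -
  have "{i. Min (sdom (s i)) < x} = (\<lambda>i. Min (sdom (s i))) -` {..<x}" by auto
  thus ?thesis using finite_vimageI[OF _ cond_mn_inj[OF c], of "{..<x}"] by simp
qed

lemma cond_mn_ex:
  assumes c: "is_cond H K (w, s)"
  shows "\<exists>i. x \<le> Min (sdom (s i))"
proof (rule ccontr)
  assume "\<not> ?thesis"
  hence "{i. Min (sdom (s i)) < x} = UNIV" by (auto simp: not_le)
  thus False using cond_mn_fin[OF c, of x] by simp
qed

lemma cond_mnmx: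
  assumes c: "is_cond H K (w, s)" and y: "y \<in> sdom (s i)"
  shows "Min (sdom (s i)) \<le> y" "y \<le> Max (sdom (s i))"
proof -
  have "finite (sdom (s i))" using cre_dom condD(3)[OF c] by blast
  thus "Min (sdom (s i)) \<le> y" "y \<le> Max (sdom (s i))" using y by simp_all
qed

lemma cond_ne:
  assumes c: "is_cond H K (w, s)"
  shows "sdom (s i) \<noteq> {}" "finite (sdom (s i))"
  using cre_dom condD(3)[OF c] by blast+

end

definition Dblk :: "(nat \<rightharpoonup> 'a) \<Rightarrow> (nat \<Rightarrow> nat) \<Rightarrow> nat \<Rightarrow> nat set" where
  "Dblk w a k = {x. x \<notin> dom w \<and> (case k of 0 \<Rightarrow> 0 | Suc k' \<Rightarrow> a k') \<le> x \<and> x < a k}"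

locale chn = ctx H K Sig Sigb for H :: "nat \<Rightarrow> 'a set" and K :: "('a, 'd) screature set" and Sig Sigb +
  fixes w :: "nat \<rightharpoonup> 'a" and s :: "nat \<Rightarrow> ('a, 'd) screature" and a b :: "nat \<Rightarrow> nat" and N :: real
  assumes cnd: "is_cond H K (w, s)"
    and big: "\<forall>i. ereal N < snor (s i)"
    and N3: "N > 3"
    and b0: "b 0 = 0"
    and ord: "\<forall>k. b k < a k \<and> a k < b (Suc k)"
    and Q1: "\<forall>k i. Min (sdom (s i)) < b (Suc k) \<longrightarrow> Max (sdom (s i)) < a (Suc k)"
    and Q3: "\<forall>k. \<exists>i. b k \<le> Min (sdom (s i)) \<and> Max (sdom (s i)) < a k"
    and Q4: "\<forall>k. \<exists>i. a k \<le> Min (sdom (s i)) \<and> Max (sdom (s i)) < b (Suc k)"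
begin

abbreviation "mn i \<equiv> Min (sdom (s i))"
abbreviation "mx i \<equiv> Max (sdom (s i))"

definition G :: "nat \<Rightarrow> nat set" where "G k = {i. b k \<le> mn i \<and> mn i < b (Suc k)}"
definition E :: "nat \<Rightarrow> nat set" where "E k = (\<Union>i\<in>G k. sdom (s i))"

lemma smb: "strict_mono b"
  unfolding strict_mono_Suc_iff using ord less_trans by blast

lemma sma: "strict_mono a"
  unfolding strict_mono_Suc_iff using ord less_trans by blast

lemma kb: "k \<le> b k" using strict_mono_imp_increasing[OF smb] .

lemma sK: "s i \<in> K" using condD(3)[OF cnd] by blast

lemma sdisj: "i \<noteq> j \<Longrightarrow> sdom (s i) \<inter> sdom (s j) = {}" using condD(5)[OF cnd] by blast

lemma mnmx: "y \<in> sdom (s i) \<Longrightarrow> mn i \<le> y \<and> y \<le> mx i" using cond_mnmx[OF cnd] by blast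

lemma G_fin: "finite (G k)"
proof -
  have "G k \<subseteq> {i. mn i < b (Suc k)}" unfolding G_def by blast
  thus ?thesis using cond_mn_fin[OF cnd] finite_subset by blast
qed

lemma G_uniq: "i \<in> G k \<Longrightarrow> i \<in> G k' \<Longrightarrow> k = k'"
proof (rule ccontr)
  assume a1: "i \<in> G k" "i \<in> G k'" "k \<noteq> k'"
  show False
  proof (cases "k < k'")
    case True
    hence "b (Suc k) \<le> b k'" using strict_mono_less_eq[OF smb] by simp
    thus False using a1 unfolding G_def by simp
  next
    case False
    hence "k' < k" using a1(3) by simp
    hence "b (Suc k') \<le> b k" using strict_mono_less_eq[OF smb] by simp
    thus False using a1 unfolding G_def by simp
  qed
qed

lemma G_cover: "\<exists>k. i \<in> G k"
  using interval_ex[OF smb, of "mn i"] b0 unfolding G_def by simp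

lemma G_k_fin: "finite {k. i \<in> G k}"
proof -
  have "{k. i \<in> G k} \<subseteq> {..mn i}" unfolding G_def using kb order_trans by fastforce
  thus ?thesis using finite_subset by blast
qed

lemma iL_ex: "\<exists>i. i \<in> G k \<and> sdom (s i) \<subseteq> E k \<and> (\<forall>y\<in>sdom (s i). y < a k)"
proof -
  obtain i where i: "b k \<le> mn i" "mx i < a k" using Q3 by blast
  obtain y where y: "y \<in> sdom (s i)" using cond_ne(1)[OF cnd, of i] by blast
  have "mn i \<le> mx i" using mnmx[OF y] by simp
  hence "mn i < b (Suc k)" using i(2) ord[rule_format, of k] by linarith
  hence iG: "i \<in> G k" unfolding G_def using i(1) by simp
  show ?thesis
  proof (intro exI[of _ i] conjI ballI)
    show "i \<in> G k" by (rule iG)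
    show "sdom (s i) \<subseteq> E k" unfolding E_def using iG by blast
    fix y assume "y \<in> sdom (s i)" thus "y < a k" using mnmx[of y i] i(2) by linarith
  qed
qed

lemma iR_ex: "\<exists>i. i \<in> G k \<and> sdom (s i) \<subseteq> E k \<and> (\<forall>y\<in>sdom (s i). a k \<le> y)"
proof -
  obtain i where i: "a k \<le> mn i" "mx i < b (Suc k)" using Q4 by blast
  obtain y where y: "y \<in> sdom (s i)" using cond_ne(1)[OF cnd, of i] by blast
  have "mn i \<le> mx i" using mnmx[OF y] by simp
  hence "mn i < b (Suc k)" "b k \<le> mn i" using i ord[rule_format, of k] by linarith+
  hence iG: "i \<in> G k" unfolding G_def by simp
  show ?thesis
  proof (intro exI[of _ i] conjI ballI)
    show "i \<in> G k" by (rule iG)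
    show "sdom (s i) \<subseteq> E k" unfolding E_def using iG by blast
    fix y assume "y \<in> sdom (s i)" thus "a k \<le> y" using mnmx[of y i] i(1) by linarith
  qed
qed

lemma G_ne: "G k \<noteq> {}" using iL_ex by blast

lemma E_upper: "x \<in> E k \<Longrightarrow> x < a (Suc k)"
proof -
  assume "x \<in> E k"
  then obtain i where i: "i \<in> G k" "x \<in> sdom (s i)" unfolding E_def by blast
  have "mx i < a (Suc k)" using Q1 i(1) unfolding G_def by blast
  thus ?thesis using mnmx[OF i(2)] by simp
qed

lemma E_lower: "x \<in> E (Suc k) \<Longrightarrow> a k < x"
proof -
  assume "x \<in> E (Suc k)"
  then obtain i where i: "i \<in> G (Suc k)" "x \<in> sdom (s i)" unfolding E_def by blast
  have "b (Suc k) \<le> mn i" using i(1) unfolding G_def by blast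
  thus ?thesis using mnmx[OF i(2)] ord by (meson le_trans less_le_trans)
qed

lemma E_disj: "k \<noteq> k' \<Longrightarrow> E k \<inter> E k' = {}"
proof -
  assume kk: "k \<noteq> k'"
  { fix x assume "x \<in> E k" "x \<in> E k'"
    then obtain i j where "i \<in> G k" "x \<in> sdom (s i)" "j \<in> G k'" "x \<in> sdom (s j)"
      unfolding E_def by blast
    moreover have "i \<noteq> j" using G_uniq kk calculation by blast
    ultimately have False using sdisj by blast }
  thus ?thesis by blast
qed

lemma E_w: "dom w \<inter> E k = {}"
  unfolding E_def using condD(4)[OF cnd] by blast

lemma E_cover: "x \<notin> dom w \<Longrightarrow> \<exists>k. x \<in> E k"
proof -
  assume "x \<notin> dom w"
  then obtain i where i: "x \<in> sdom (s i)" using cond_cover[OF cnd] by blast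
  obtain k where "i \<in> G k" using G_cover by blast
  thus ?thesis using i unfolding E_def by blast
qed

lemma E_ne: "E k \<noteq> {}"
  using iL_ex cond_ne(1)[OF cnd] by blast

lemma E_fin: "finite (E k)"
  unfolding E_def using G_fin cond_ne(2)[OF cnd] by blast

text \<open>Step A: gluing the groups.\<close>

definition gP :: "nat \<Rightarrow> ('a, 'd) screature \<Rightarrow> bool" where
  "gP k g \<longleftrightarrow> g \<in> Sig (s ` G k) \<and> (\<forall>R. (\<forall>i\<in>G k. ereal R \<le> snor (s i)) \<longrightarrow> ereal R - 1 \<le> snor g)"

definition gg :: "nat \<Rightarrow> ('a, 'd) screature" where "gg = (SOME g. \<forall>k. gP k (g k))"

lemma gg_P: "gP k (gg k)"
proof -
  have "\<forall>k. \<exists>g. gP k g"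
  proof
    fix k
    have "\<forall>i\<in>G k. \<forall>j\<in>G k. i \<noteq> j \<longrightarrow> sdom (s i) \<inter> sdom (s j) = {}" using sdisj by blast
    thus "\<exists>g. gP k g" using glue_set[OF G_fin[of k] G_ne[of k], where s=s] sK unfolding gP_def by blast
  qed
  hence "\<exists>g. \<forall>k. gP k (g k)" by (rule choice)
  hence "\<forall>k. gP k (gg k)" unfolding gg_def by (rule someI_ex)
  thus ?thesis by blast
qed

lemma gg_Sig: "gg k \<in> Sig (s ` G k)" using gg_P unfolding gP_def by blast

lemma sG_K: "s ` G k \<subseteq> K" "finite (s ` G k)" using sK G_fin by auto

lemma gg_K: "gg k \<in> K" using Sig_K[OF sG_K(2) sG_K(1)] gg_Sig by blast

lemma gg_dom: "sdom (gg k) = E k"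
  using Sig_dom[OF sG_K(2) sG_K(1) gg_Sig] unfolding E_def by simp

lemma gg_fin: "snor (gg k) \<noteq> \<infinity>"
proof -
  obtain i where "i \<in> G k" using G_ne by blast
  thus ?thesis using comp_finite[OF sG_K(2) sG_K(1) gg_Sig, of "s i"] condD(7)[OF cnd] by blast
qed

lemma gg_bound: "(\<forall>i\<in>G k. ereal R \<le> snor (s i)) \<Longrightarrow> ereal R - 1 \<le> snor (gg k)"
  using gg_P unfolding gP_def by blast

lemma gg_nor: "ereal (N - 1) \<le> snor (gg k)"
proof -
  have "\<forall>i\<in>G k. ereal N \<le> snor (s i)" using big less_imp_le by blast
  hence "ereal N - 1 \<le> snor (gg k)" by (rule gg_bound)
  thus ?thesis by (simp add: one_ereal_def)
qed

lemma gg_lim: "finite {k. snor (gg k) \<le> ereal R}"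
proof -
  define L where "L = {i. snor (s i) \<le> ereal (R + 2)}"
  have L: "finite L" unfolding L_def using condD(8)[OF cnd] by blast
  have "{k. snor (gg k) \<le> ereal R} \<subseteq> (\<Union>i\<in>L. {k. i \<in> G k})"
  proof
    fix k assume k: "k \<in> {k. snor (gg k) \<le> ereal R}"
    show "k \<in> (\<Union>i\<in>L. {k. i \<in> G k})"
    proof (rule ccontr)
      assume "k \<notin> (\<Union>i\<in>L. {k. i \<in> G k})"
      hence "\<forall>i\<in>G k. \<not> snor (s i) \<le> ereal (R + 2)" unfolding L_def by auto
      hence "\<forall>i\<in>G k. ereal (R + 2) \<le> snor (s i)" by (auto simp: not_le intro: less_imp_le)
      hence "ereal (R + 2) - 1 \<le> snor (gg k)" by (rule gg_bound)
      moreover have "ereal (R + 2) - 1 = ereal (R + 1)" by (simp add: one_ereal_def)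
      ultimately have "ereal (R + 1) \<le> snor (gg k)" by simp
      moreover have "snor (gg k) \<le> ereal R" using k by simp
      ultimately have "ereal (R + 1) \<le> ereal R" by (rule order_trans)
      thus False by simp
    qed
  qed
  moreover have "finite (\<Union>i\<in>L. {k. i \<in> G k})" using L G_k_fin by blast
  ultimately show ?thesis using finite_subset by blast
qed

lemma gg_cond: "is_cond H K (w, gg)"
proof (rule condI)
  show "finite (dom w)" using condD(1)[OF cnd] .
  show "\<forall>i\<in>dom w. the (w i) \<in> H i" using condD(2)[OF cnd] .
  show "\<forall>i. gg i \<in> K" using gg_K by blast
  show "\<forall>i. dom w \<inter> sdom (gg i) = {}" unfolding gg_dom using E_w by simp
  show "\<forall>i j. i \<noteq> j \<longrightarrow> sdom (gg i) \<inter> sdom (gg j) = {}" unfolding gg_dom using E_disj by simp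
  have "\<And>x. x \<in> dom w \<or> (\<exists>i. x \<in> E i)" using E_cover by blast
  thus "dom w \<union> (\<Union>i. sdom (gg i)) = UNIV" unfolding gg_dom by blast
  show "\<forall>i. snor (gg i) \<noteq> \<infinity>" using gg_fin by blast
  show "\<forall>R. finite {i. snor (gg i) \<le> ereal R}" using gg_lim by blast
qed

lemma step_A: "op_step H K Sig Sigb (w, s) (w, gg)"
proof -
  have "\<exists>A :: nat \<Rightarrow> nat set. (\<forall>i. finite (A i)) \<and>
        (\<forall>i j. i \<noteq> j \<longrightarrow> A i \<inter> A j = {}) \<and> (\<forall>i. gg i \<in> Sig (s ` A i))"
    using G_fin G_uniq gg_Sig by (intro exI[of _ G]) blast
  hence "sigma_step Sig (w, s) (w, gg)" unfolding sigma_step_def by simp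
  thus ?thesis unfolding op_step_def using cnd gg_cond by blast
qed

end

context chn begin

text \<open>Step B: cutting.\<close>

definition z :: "nat \<Rightarrow> nat set" where "z k = E k \<inter> {..<a k}"

lemma gg_gt1: "snor (gg k) > 1"
proof -
  have "ereal 1 < ereal (N - 1)" using N3 by simp
  thus ?thesis using gg_nor[of k] unfolding one_ereal_def by (meson order_less_le_trans)
qed

lemma z_ne: "z k \<noteq> {}"
proof -
  obtain i where i: "i \<in> G k" "sdom (s i) \<subseteq> E k" "\<forall>y\<in>sdom (s i). y < a k" using iL_ex by blast
  obtain y where y: "y \<in> sdom (s i)" using cond_ne(1)[OF cnd, of i] by blast
  have "y \<in> z k" unfolding z_def using i y by blast
  thus ?thesis by blast
qed

lemma z_psub: "z k \<subset> sdom (gg k)"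
proof -
  obtain i where i: "i \<in> G k" "sdom (s i) \<subseteq> E k" "\<forall>y\<in>sdom (s i). a k \<le> y" using iR_ex by blast
  obtain y where y: "y \<in> sdom (s i)" using cond_ne(1)[OF cnd, of i] by blast
  have "y \<in> E k" "y \<notin> z k" unfolding z_def using i y by auto
  moreover have "z k \<subseteq> E k" unfolding z_def by blast
  ultimately show ?thesis unfolding gg_dom by blast
qed

definition cP :: "nat \<Rightarrow> ('a, 'd) screature \<times> ('a, 'd) screature \<Rightarrow> bool" where
  "cP k p \<longleftrightarrow> fst p \<in> K \<and> snd p \<in> K \<and> sdom (fst p) = z k \<and> sdom (snd p) = E k - z k \<and>
     snor (gg k) - 1 \<le> snor (fst p) \<and> snor (gg k) - 1 \<le> snor (snd p) \<and> {fst p, snd p} \<in> Sigb (gg k)"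

definition pp :: "nat \<Rightarrow> ('a, 'd) screature \<times> ('a, 'd) screature" where
  "pp = (SOME p. \<forall>k. cP k (p k))"

lemma pp_P: "cP k (pp k)"
proof -
  have CP: "\<forall>t\<in>K. snor t > 1 \<longrightarrow>
        (\<forall>z. z \<noteq> {} \<and> z \<subset> sdom t \<longrightarrow>
          (\<exists>s0\<in>K. \<exists>s1\<in>K. sdom s0 = z \<and> sdom s1 = sdom t - z \<and>
             snor s0 \<ge> snor t - 1 \<and> snor s1 \<ge> snor t - 1 \<and> {s0, s1} \<in> Sigb t))"
    using cutp unfolding cutting_property_def .
  have "\<forall>k. \<exists>p. cP k p"
  proof
    fix k
    have "\<exists>s0\<in>K. \<exists>s1\<in>K. sdom s0 = z k \<and> sdom s1 = sdom (gg k) - z k \<and>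
             snor s0 \<ge> snor (gg k) - 1 \<and> snor s1 \<ge> snor (gg k) - 1 \<and> {s0, s1} \<in> Sigb (gg k)"
      using mp[OF spec[OF mp[OF bspec[OF CP gg_K[of k]] gg_gt1[of k]], of "z k"] conjI[OF z_ne[of k] z_psub[of k]]] .
    then obtain s0 s1 where "s0 \<in> K" "s1 \<in> K" "sdom s0 = z k" "sdom s1 = sdom (gg k) - z k"
             "snor s0 \<ge> snor (gg k) - 1" "snor s1 \<ge> snor (gg k) - 1" "{s0, s1} \<in> Sigb (gg k)"
      by blast
    hence "cP k (s0, s1)" unfolding cP_def gg_dom by simp
    thus "\<exists>p. cP k p" by blast
  qed
  hence "\<exists>p. \<forall>k. cP k (p k)" by (rule choice)
  hence "\<forall>k. cP k (pp k)" unfolding pp_def by (rule someI_ex)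
  thus ?thesis by blast
qed

definition cc :: "nat \<Rightarrow> ('a, 'd) screature" where
  "cc m = (if even m then fst (pp (m div 2)) else snd (pp (m div 2)))"

lemma cc_even: "cc (2 * k) = fst (pp k)" unfolding cc_def by simp
lemma cc_odd: "cc (Suc (2 * k)) = snd (pp k)" unfolding cc_def by simp

lemma cc_K: "cc m \<in> K" using pp_P unfolding cc_def cP_def by simp

lemma cc_dom: "sdom (cc m) = (if even m then z (m div 2) else E (m div 2) - z (m div 2))"
  using pp_P unfolding cc_def cP_def by simp

lemma cc_sub: "sdom (cc m) \<subseteq> E (m div 2)"
  unfolding cc_dom z_def by auto

lemma cc_nor1: "snor (gg (m div 2)) - 1 \<le> snor (cc m)"
  using pp_P unfolding cc_def cP_def by simp

lemma cc_nor: "ereal (N - 2) \<le> snor (cc m)"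
proof -
  have "ereal (N - 1 - 1) \<le> snor (gg (m div 2)) - 1" by (rule ereal_sub1[OF gg_nor])
  thus ?thesis using cc_nor1[of m] by simp
qed

lemma pp_Sigb: "{fst (pp k), snd (pp k)} \<in> Sigb (gg k)"
  using pp_P unfolding cP_def by simp

lemma pp_fin: "snor (fst (pp k)) \<noteq> \<infinity> \<and> snor (snd (pp k)) \<noteq> \<infinity>"
proof
  have P: "cP k (pp k)" by (rule pp_P)
  have K0: "fst (pp k) \<in> K" and K1: "snd (pp k) \<in> K" using P unfolding cP_def by simp_all
  have d0: "sdom (fst (pp k)) = z k" and d1: "sdom (snd (pp k)) = E k - z k"
    using P unfolding cP_def by simp_all
  have dj: "sdom (fst (pp k)) \<inter> sdom (snd (pp k)) = {}" unfolding d0 d1 by blast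
  have dj': "sdom (snd (pp k)) \<inter> sdom (fst (pp k)) = {}" unfolding d0 d1 by blast
  have cut: "{fst (pp k), snd (pp k)} \<in> Sigb (gg k)" by (rule pp_Sigb)
  have cut': "{snd (pp k), fst (pp k)} \<in> Sigb (gg k)" using cut by (simp add: insert_commute)
  have gv: "\<And>i. i \<in> G k \<Longrightarrow> \<forall>v\<in>sval (gg k). restrict v (sdom (s i)) \<in> sval (s i)"
  proof -
    fix i assume "i \<in> G k"
    hence "s i \<in> s ` G k" by blast
    thus "\<forall>v\<in>sval (gg k). restrict v (sdom (s i)) \<in> sval (s i)"
      using Sig_val[OF sG_K(2) sG_K(1) gg_Sig] by blast
  qed
  obtain i where i: "i \<in> G k" "sdom (s i) \<subseteq> E k" "\<forall>y\<in>sdom (s i). y < a k" using iL_ex by blast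
  have "sdom (s i) \<subseteq> sdom (fst (pp k))" unfolding d0 z_def using i by auto
  thus "snor (fst (pp k)) \<noteq> \<infinity>"
    using piece_finite[OF gg_K cut K0 K1 dj sK _ _ gv[OF i(1)]] condD(7)[OF cnd] by blast
  obtain j where j: "j \<in> G k" "sdom (s j) \<subseteq> E k" "\<forall>y\<in>sdom (s j). a k \<le> y" using iR_ex by blast
  have "sdom (s j) \<subseteq> sdom (snd (pp k))" unfolding d1 z_def using j by auto
  thus "snor (snd (pp k)) \<noteq> \<infinity>"
    using piece_finite[OF gg_K cut' K1 K0 dj' sK _ _ gv[OF j(1)]] condD(7)[OF cnd] by blast
qed

lemma cc_fin: "snor (cc m) \<noteq> \<infinity>"
  unfolding cc_def using pp_fin by simp

lemma cc_disj:
  assumes "m \<noteq> m'" shows "sdom (cc m) \<inter> sdom (cc m') = {}"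
proof (cases "m div 2 = m' div 2")
  case True
  hence "even m \<noteq> even m'" using assms
    by (metis div_mult_mod_eq odd_iff_mod_2_eq_one parity_cases)
  thus ?thesis unfolding cc_dom using True by auto
next
  case False
  thus ?thesis using cc_sub[of m] cc_sub[of m'] E_disj[OF False] by blast
qed

lemma cc_cover: "x \<notin> dom w \<Longrightarrow> \<exists>m. x \<in> sdom (cc m)"
proof -
  assume "x \<notin> dom w"
  then obtain k where k: "x \<in> E k" using E_cover by blast
  show ?thesis
  proof (cases "x \<in> z k")
    case True
    hence "x \<in> sdom (cc (2 * k))" unfolding cc_dom by simp
    thus ?thesis by blast
  next
    case False
    hence "x \<in> sdom (cc (Suc (2 * k)))" unfolding cc_dom using k by simp
    thus ?thesis by blast
  qed
qed

lemma cc_lim: "finite {m. snor (cc m) \<le> ereal R}"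
proof -
  have "{m. snor (cc m) \<le> ereal R} \<subseteq> {m. m div 2 \<in> {k. snor (gg k) \<le> ereal (R + 1)}}"
  proof
    fix m assume "m \<in> {m. snor (cc m) \<le> ereal R}"
    hence "snor (gg (m div 2)) - 1 \<le> ereal R" using cc_nor1[of m] by simp
    thus "m \<in> {m. m div 2 \<in> {k. snor (gg k) \<le> ereal (R + 1)}}" using ereal_le_plus1 by simp
  qed
  moreover have "finite {m::nat. m div 2 \<in> {k. snor (gg k) \<le> ereal (R + 1)}}"
    by (rule finite_div2[OF gg_lim])
  ultimately show ?thesis by (rule finite_subset)
qed

lemma cc_cond: "is_cond H K (w, cc)"
proof (rule condI)
  show "finite (dom w)" using condD(1)[OF cnd] .
  show "\<forall>i\<in>dom w. the (w i) \<in> H i" using condD(2)[OF cnd] .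
  show "\<forall>i. cc i \<in> K" using cc_K by blast
  show "\<forall>i. dom w \<inter> sdom (cc i) = {}" using cc_sub E_w by blast
  show "\<forall>i j. i \<noteq> j \<longrightarrow> sdom (cc i) \<inter> sdom (cc j) = {}" using cc_disj by blast
  have "\<And>x. x \<in> dom w \<or> (\<exists>i. x \<in> sdom (cc i))" using cc_cover by blast
  thus "dom w \<union> (\<Union>i. sdom (cc i)) = UNIV" by blast
  show "\<forall>i. snor (cc i) \<noteq> \<infinity>" using cc_fin by blast
  show "\<forall>R. finite {i. snor (cc i) \<le> ereal R}" using cc_lim by blast
qed

lemma step_B: "op_step H K Sig Sigb (w, gg) (w, cc)"
proof -
  define A where "A = (\<lambda>k::nat. {2 * k, Suc (2 * k)})"
  have "\<forall>i. finite (A i) \<and> A i \<noteq> {}" unfolding A_def by simp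
  moreover have "\<forall>i j. i \<noteq> j \<longrightarrow> A i \<inter> A j = {}" unfolding A_def by auto
  moreover have "\<forall>i. cc ` A i \<in> Sigb (gg i)" unfolding A_def using pp_Sigb
    by (simp add: cc_even cc_odd del: mult_Suc_right)
  ultimately have "sigmabot_step Sigb (w, gg) (w, cc)" unfolding sigmabot_step_def by auto
  thus ?thesis unfolding op_step_def using gg_cond cc_cond by blast
qed

end

context chn begin

text \<open>Step C: gluing neighbouring pieces.\<close>

definition uP :: "nat \<Rightarrow> ('a, 'd) screature \<Rightarrow> bool" where
  "uP k u \<longleftrightarrow> u \<in> Sig (cc ` {Suc (2 * k), Suc (Suc (2 * k))}) \<and>
     (\<forall>R. (\<forall>i\<in>{Suc (2 * k), Suc (Suc (2 * k))}. ereal R \<le> snor (cc i)) \<longrightarrow> ereal R - 1 \<le> snor u)"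

definition vv :: "nat \<Rightarrow> ('a, 'd) screature" where "vv = (SOME f. \<forall>k. uP k (f k))"

lemma vv_P: "uP k (vv k)"
proof -
  have "\<forall>k. \<exists>u. uP k u"
  proof
    fix k
    have "\<forall>i\<in>{Suc (2 * k), Suc (Suc (2 * k))}. \<forall>j\<in>{Suc (2 * k), Suc (Suc (2 * k))}.
       i \<noteq> j \<longrightarrow> sdom (cc i) \<inter> sdom (cc j) = {}" using cc_disj by blast
    moreover have "\<forall>i\<in>{Suc (2 * k), Suc (Suc (2 * k))}. cc i \<in> K" using cc_K by blast
    ultimately show "\<exists>u. uP k u"
      using glue_set[of "{Suc (2 * k), Suc (Suc (2 * k))}" cc] unfolding uP_def by auto
  qed
  hence "\<exists>f. \<forall>k. uP k (f k)" by (rule choice)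
  hence "\<forall>k. uP k (vv k)" unfolding vv_def by (rule someI_ex)
  thus ?thesis by blast
qed

definition uu :: "nat \<Rightarrow> ('a, 'd) screature" where
  "uu k = (case k of 0 \<Rightarrow> cc 0 | Suc k' \<Rightarrow> vv k')"

definition AC :: "nat \<Rightarrow> nat set" where
  "AC k = (case k of 0 \<Rightarrow> {0} | Suc k' \<Rightarrow> {Suc (2 * k'), Suc (Suc (2 * k'))})"

lemma AC_fin: "finite (AC k)" unfolding AC_def by (cases k) auto

lemma ccA_K: "cc ` AC k \<subseteq> K" "finite (cc ` AC k)" using cc_K AC_fin by auto

lemma uu_Sig: "uu k \<in> Sig (cc ` AC k)"
proof (cases k)
  case 0 thus ?thesis unfolding uu_def AC_def using Sig_refl[OF cc_K] by simp
next
  case (Suc k') thus ?thesis unfolding uu_def AC_def using vv_P[of k'] unfolding uP_def by simp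
qed

lemma uu_K: "uu k \<in> K" using Sig_K[OF ccA_K(2) ccA_K(1)] uu_Sig by blast

lemma uu_fin: "snor (uu k) \<noteq> \<infinity>"
proof -
  have "cc (if k = 0 then 0 else Suc (2 * (k - 1))) \<in> cc ` AC k" unfolding AC_def by (cases k) auto
  thus ?thesis using comp_finite[OF ccA_K(2) ccA_K(1) uu_Sig] cc_fin by blast
qed

lemma uu_dom0: "sdom (uu 0) = z 0" unfolding uu_def using cc_dom[of 0] by simp

lemma uu_domS: "sdom (uu (Suc k)) = (E k - z k) \<union> z (Suc k)"
proof -
  have "sdom (uu (Suc k)) = (\<Union>x\<in>cc ` AC (Suc k). sdom x)" using Sig_dom[OF ccA_K(2) ccA_K(1) uu_Sig] .
  also have "\<dots> = sdom (cc (Suc (2 * k))) \<union> sdom (cc (Suc (Suc (2 * k))))" unfolding AC_def by simp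
  also have "\<dots> = (E k - z k) \<union> z (Suc k)" unfolding cc_dom by simp
  finally show ?thesis .
qed

lemma a_le: "k \<le> k' \<Longrightarrow> a k \<le> a k'" using strict_mono_less_eq[OF sma] by simp

lemma uu_dom: "sdom (uu k) = Dblk w a k"
proof (cases k)
  case 0
  have "z 0 = Dblk w a 0"
  proof
    show "z 0 \<subseteq> Dblk w a 0" unfolding z_def Dblk_def using E_w by auto
    show "Dblk w a 0 \<subseteq> z 0"
    proof
      fix x assume x: "x \<in> Dblk w a 0"
      hence xw: "x \<notin> dom w" and xa: "x < a 0" unfolding Dblk_def by auto
      obtain k' where k': "x \<in> E k'" using E_cover[OF xw] by blast
      have "k' = 0"
      proof (rule ccontr)
        assume "k' \<noteq> 0"
        then obtain k'' where "k' = Suc k''" using not0_implies_Suc by blast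
        hence "a k'' < x" using E_lower k' by blast
        moreover have "a 0 \<le> a k''" using a_le by simp
        ultimately show False using xa by simp
      qed
      thus "x \<in> z 0" unfolding z_def using k' xa by simp
    qed
  qed
  thus ?thesis using 0 uu_dom0 by simp
next
  case (Suc k0)
  have "(E k0 - z k0) \<union> z (Suc k0) = Dblk w a (Suc k0)"
  proof
    show "(E k0 - z k0) \<union> z (Suc k0) \<subseteq> Dblk w a (Suc k0)"
    proof
      fix x assume x: "x \<in> (E k0 - z k0) \<union> z (Suc k0)"
      thus "x \<in> Dblk w a (Suc k0)"
      proof
        assume x1: "x \<in> E k0 - z k0"
        hence "x \<in> E k0" "\<not> x < a k0" unfolding z_def by auto
        moreover have "x < a (Suc k0)" using E_upper calculation(1) by blast
        moreover have "x \<notin> dom w" using E_w calculation(1) by blast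
        ultimately show ?thesis unfolding Dblk_def by simp
      next
        assume x2: "x \<in> z (Suc k0)"
        hence "x \<in> E (Suc k0)" "x < a (Suc k0)" unfolding z_def by auto
        moreover have "a k0 < x" using E_lower calculation(1) by blast
        moreover have "x \<notin> dom w" using E_w calculation(1) by blast
        ultimately show ?thesis unfolding Dblk_def by simp
      qed
    qed
    show "Dblk w a (Suc k0) \<subseteq> (E k0 - z k0) \<union> z (Suc k0)"
    proof
      fix x assume x: "x \<in> Dblk w a (Suc k0)"
      hence xw: "x \<notin> dom w" and xa: "a k0 \<le> x" "x < a (Suc k0)" unfolding Dblk_def by auto
      obtain k' where k': "x \<in> E k'" using E_cover[OF xw] by blast
      have "k' = k0 \<or> k' = Suc k0"
      proof (rule ccontr)
        assume nk: "\<not> (k' = k0 \<or> k' = Suc k0)"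
        show False
        proof (cases "k' < k0")
          case True
          hence "x < a (Suc k')" using E_upper k' by blast
          moreover have "a (Suc k') \<le> a k0" using a_le True by simp
          ultimately show False using xa by simp
        next
          case False
          hence "Suc k0 < k'" using nk by simp
          then obtain k'' where kk: "k' = Suc k''" "Suc k0 \<le> k''" by (cases k') auto
          hence "a k'' < x" using E_lower k' by blast
          moreover have "a (Suc k0) \<le> a k''" using a_le kk by simp
          ultimately show False using xa by simp
        qed
      qed
      thus "x \<in> (E k0 - z k0) \<union> z (Suc k0)"
      proof
        assume "k' = k0" thus ?thesis using k' xa unfolding z_def by auto
      next
        assume "k' = Suc k0" thus ?thesis using k' xa unfolding z_def by auto
      qed
    qed
  qed
  thus ?thesis using Suc uu_domS by simp
qed

lemma uu_nor: "ereal (N - 3) \<le> snor (uu k)"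
proof (cases k)
  case 0
  have "ereal (N - 3) \<le> ereal (N - 2)" by simp
  hence "ereal (N - 3) \<le> snor (cc 0)" using cc_nor[of 0] by (rule order_trans)
  thus ?thesis using 0 unfolding uu_def by simp
next
  case (Suc k')
  have "\<forall>i\<in>{Suc (2 * k'), Suc (Suc (2 * k'))}. ereal (N - 2) \<le> snor (cc i)" using cc_nor by blast
  hence "ereal (N - 2) - 1 \<le> snor (vv k')" using vv_P[of k'] unfolding uP_def by blast
  thus ?thesis using Suc unfolding uu_def by (simp add: one_ereal_def)
qed

lemma inj_odd: "inj (\<lambda>k::nat. Suc (2 * k))" by (auto intro: injI)
lemma inj_even2: "inj (\<lambda>k::nat. Suc (Suc (2 * k)))" by (auto intro: injI)

lemma uu_lim: "finite {k. snor (uu k) \<le> ereal R}"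
proof -
  define L1 where "L1 = (\<lambda>k::nat. Suc (2 * k)) -` {m. snor (cc m) \<le> ereal (R + 2)}"
  define L2 where "L2 = (\<lambda>k::nat. Suc (Suc (2 * k))) -` {m. snor (cc m) \<le> ereal (R + 2)}"
  have f1: "finite L1" unfolding L1_def using finite_vimageI[OF cc_lim inj_odd] .
  have f2: "finite L2" unfolding L2_def using finite_vimageI[OF cc_lim inj_even2] .
  have "{k. snor (uu k) \<le> ereal R} \<subseteq> insert 0 (Suc ` (L1 \<union> L2))"
  proof
    fix k assume k: "k \<in> {k. snor (uu k) \<le> ereal R}"
    show "k \<in> insert 0 (Suc ` (L1 \<union> L2))"
    proof (cases k)
      case 0 thus ?thesis by simp
    next
      case (Suc k')
      have "k' \<in> L1 \<union> L2"
      proof (rule ccontr)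
        assume "k' \<notin> L1 \<union> L2"
        hence "\<not> snor (cc (Suc (2 * k'))) \<le> ereal (R + 2)" "\<not> snor (cc (Suc (Suc (2 * k')))) \<le> ereal (R + 2)"
          unfolding L1_def L2_def by auto
        hence "\<forall>i\<in>{Suc (2 * k'), Suc (Suc (2 * k'))}. ereal (R + 2) \<le> snor (cc i)"
          by (auto simp: not_le intro: less_imp_le)
        hence "ereal (R + 2) - 1 \<le> snor (vv k')" using vv_P[of k'] unfolding uP_def by blast
        moreover have "ereal (R + 2) - 1 = ereal (R + 1)" by (simp add: one_ereal_def)
        moreover have "snor (vv k') \<le> ereal R" using k Suc unfolding uu_def by simp
        ultimately have "ereal (R + 1) \<le> ereal R" by (metis order_trans)
        thus False by simp
      qed
      thus ?thesis using Suc by blast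
    qed
  qed
  moreover have "finite (insert 0 (Suc ` (L1 \<union> L2)))" using f1 f2 by simp
  ultimately show ?thesis by (rule finite_subset)
qed

lemma Dblk_disj: "k \<noteq> k' \<Longrightarrow> Dblk w a k \<inter> Dblk w a k' = {}"
proof -
  have X: "k < k' \<Longrightarrow> Dblk w a k \<inter> Dblk w a k' = {}" for k k'
  proof -
    assume kk: "k < k'"
    then obtain k'' where k'': "k' = Suc k''" "k \<le> k''" by (cases k') auto
    have "a k \<le> a k''" using a_le k'' by simp
    thus ?thesis unfolding Dblk_def using k'' by auto
  qed
  assume "k \<noteq> k'"
  hence "k < k' \<or> k' < k" by arith
  thus ?thesis using X[of k k'] X[of k' k] by blast
qed

lemma Dblk_cover: "x \<notin> dom w \<Longrightarrow> \<exists>k. x \<in> Dblk w a k"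
proof -
  assume xw: "x \<notin> dom w"
  show ?thesis
  proof (cases "x < a 0")
    case True thus ?thesis using xw unfolding Dblk_def by (intro exI[of _ 0]) simp
  next
    case False
    then obtain k where "a k \<le> x" "x < a (Suc k)" using interval_ex[OF sma, of x] by auto
    thus ?thesis using xw unfolding Dblk_def by (intro exI[of _ "Suc k"]) simp
  qed
qed

lemma uu_cond: "is_cond H K (w, uu)"
proof (rule condI)
  show "finite (dom w)" using condD(1)[OF cnd] .
  show "\<forall>i\<in>dom w. the (w i) \<in> H i" using condD(2)[OF cnd] .
  show "\<forall>i. uu i \<in> K" using uu_K by blast
  show "\<forall>i. dom w \<inter> sdom (uu i) = {}" unfolding uu_dom Dblk_def by blast
  show "\<forall>i j. i \<noteq> j \<longrightarrow> sdom (uu i) \<inter> sdom (uu j) = {}" unfolding uu_dom using Dblk_disj by blast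
  have "\<And>x. x \<in> dom w \<or> (\<exists>i. x \<in> Dblk w a i)" using Dblk_cover by blast
  thus "dom w \<union> (\<Union>i. sdom (uu i)) = UNIV" unfolding uu_dom by blast
  show "\<forall>i. snor (uu i) \<noteq> \<infinity>" using uu_fin by blast
  show "\<forall>R. finite {i. snor (uu i) \<le> ereal R}" using uu_lim by blast
qed

lemma AC_disj: "k \<noteq> k' \<Longrightarrow> AC k \<inter> AC k' = {}"
  unfolding AC_def by (cases k; cases k') auto

lemma step_C: "op_step H K Sig Sigb (w, cc) (w, uu)"
proof -
  have "\<exists>A :: nat \<Rightarrow> nat set. (\<forall>i. finite (A i)) \<and>
        (\<forall>i j. i \<noteq> j \<longrightarrow> A i \<inter> A j = {}) \<and> (\<forall>i. uu i \<in> Sig (cc ` A i))"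
    using AC_fin AC_disj uu_Sig by (intro exI[of _ AC]) blast
  hence "sigma_step Sig (w, cc) (w, uu)" unfolding sigma_step_def by simp
  thus ?thesis unfolding op_step_def using cc_cond uu_cond by blast
qed

lemma chain_main:
  "Q_le H K Sig Sigb (w, s) (w, uu) \<and> is_cond H K (w, uu) \<and>
   (\<forall>k. sdom (uu k) = Dblk w a k) \<and> (\<forall>k. ereal (N - 3) \<le> snor (uu k))"
proof (intro conjI allI)
  have "(op_step H K Sig Sigb)\<^sup>*\<^sup>* (w, s) (w, uu)"
    using step_A step_B step_C by (meson rtranclp.rtrancl_into_rtrancl rtranclp.rtrancl_refl)
  thus "Q_le H K Sig Sigb (w, s) (w, uu)" unfolding Q_le_def using cnd by blast
  show "is_cond H K (w, uu)" by (rule uu_cond)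
  show "\<And>k. sdom (uu k) = Dblk w a k" by (rule uu_dom)
  show "\<And>k. ereal (N - 3) \<le> snor (uu k)" by (rule uu_nor)
qed

end

definition vsel :: "(nat \<Rightarrow> ('a, 'd) screature) \<Rightarrow> nat \<Rightarrow> nat \<Rightarrow> 'a" where
  "vsel t i = (SOME v. v \<in> sval (t i))"

definition decmap :: "(nat \<rightharpoonup> 'a) \<Rightarrow> (nat \<Rightarrow> ('a, 'd) screature) \<Rightarrow> nat \<Rightarrow> nat \<rightharpoonup> 'a" where
  "decmap w0 t m = (\<lambda>k. if \<exists>i<m. k \<in> sdom (t i) then Some (vsel t (SOME i. i < m \<and> k \<in> sdom (t i)) k) else w0 k)"

definition mcut :: "real \<Rightarrow> (nat \<Rightarrow> ('a, 'd) screature) \<Rightarrow> nat" where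
  "mcut N t = (LEAST m. \<forall>i\<ge>m. ereal N < snor (t i))"

context ctx begin

lemma vsel_in: "t i \<in> K \<Longrightarrow> vsel t i \<in> sval (t i)"
  unfolding vsel_def using cre_val by (simp add: some_in_eq)

lemma decide:
  fixes N :: real and t :: "nat \<Rightarrow> ('a, 'd) screature" and w0 :: "nat \<rightharpoonup> 'a"
  assumes c: "is_cond H K (w0, t)"
  defines "m \<equiv> mcut N t"
  defines "w \<equiv> decmap w0 t m"
  defines "s \<equiv> (\<lambda>i. t (i + m))"
  shows "op_step H K Sig Sigb (w0, t) (w, s) \<and> is_cond H K (w, s) \<and> (\<forall>i. ereal N < snor (s i))"
proof -
  have tK: "\<And>i. t i \<in> K" using condD(3)[OF c] by blast
  have tdj: "\<And>i j. i \<noteq> j \<Longrightarrow> sdom (t i) \<inter> sdom (t j) = {}" using condD(5)[OF c] by blast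
  have tw: "\<And>i. dom w0 \<inter> sdom (t i) = {}" using condD(4)[OF c] by blast
  have "finite {i. snor (t i) \<le> ereal N}" using condD(8)[OF c] by blast
  then obtain m0 where "{i. snor (t i) \<le> ereal N} \<subseteq> {..<m0}" using finite_nat_iff_bounded by blast
  hence ex: "\<forall>i\<ge>m0. ereal N < snor (t i)" by (auto simp: not_le[symmetric])
  have mprop: "\<forall>i\<ge>m. ereal N < snor (t i)" unfolding m_def mcut_def using LeastI_ex[of "\<lambda>m. \<forall>i\<ge>m. ereal N < snor (t i)"] ex by blast
  have big: "\<forall>i. ereal N < snor (s i)" unfolding s_def using mprop by simp
  have wdec: "\<And>i k. i < m \<Longrightarrow> k \<in> sdom (t i) \<Longrightarrow> w k = Some (vsel t i k)"
  proof -
    fix i k assume ik: "i < m" "k \<in> sdom (t i)"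
    have "(SOME i'. i' < m \<and> k \<in> sdom (t i')) = i"
    proof (rule some_equality)
      show "i < m \<and> k \<in> sdom (t i)" using ik by simp
      fix i' assume "i' < m \<and> k \<in> sdom (t i')"
      thus "i' = i" using tdj ik by blast
    qed
    thus "w k = Some (vsel t i k)" unfolding w_def decmap_def using ik by auto
  qed
  have wold: "\<And>k. \<not> (\<exists>i<m. k \<in> sdom (t i)) \<Longrightarrow> w k = w0 k"
    unfolding w_def decmap_def by (simp only: if_not_P if_False)
  have domw: "dom w = dom w0 \<union> (\<Union>i\<in>{..<m}. sdom (t i))"
  proof (rule set_eqI)
    fix k show "k \<in> dom w \<longleftrightarrow> k \<in> dom w0 \<union> (\<Union>i\<in>{..<m}. sdom (t i))"
    proof (cases "\<exists>i<m. k \<in> sdom (t i)")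
      case True
      then obtain i where "i < m" "k \<in> sdom (t i)" by blast
      thus ?thesis using wdec by auto
    next
      case False thus ?thesis using wold[OF False] by (simp add: domIff)
    qed
  qed
  have sub: "w0 \<subseteq>\<^sub>m w"
    unfolding map_le_def
  proof
    fix k assume k: "k \<in> dom w0"
    hence "\<not> (\<exists>i<m. k \<in> sdom (t i))" using tw by blast
    thus "w0 k = w k" using wold by simp
  qed
  have vP: "\<And>i. vsel t i \<in> PiE (sdom (t i)) H"
  proof -
    fix i
    have "vsel t i \<in> sval (t i)" by (rule vsel_in[OF tK])
    moreover have "sval (t i) \<subseteq> PiE (sdom (t i)) H" using cre_val[OF tK[of i]] by (rule conjunct2)
    ultimately show "vsel t i \<in> PiE (sdom (t i)) H" by (rule subsetD[rotated])
  qed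
  have restr: "\<And>i. i < m \<Longrightarrow> restrict (\<lambda>k. the (w k)) (sdom (t i)) = vsel t i"
  proof -
    fix i assume i: "i < m"
    show "restrict (\<lambda>k. the (w k)) (sdom (t i)) = vsel t i"
    proof (rule ext)
      fix k
      show "restrict (\<lambda>k. the (w k)) (sdom (t i)) k = vsel t i k"
      proof (cases "k \<in> sdom (t i)")
        case True thus ?thesis using wdec[OF i True] by simp
      next
        case False
        have "vsel t i k = undefined" using vP[of i] False by (rule PiE_arb)
        thus ?thesis using False by simp
      qed
    qed
  qed
  have dstep: "decide_step (w0, t) (w, s)"
    unfolding decide_step_def
  proof (simp, intro exI[of _ "{..<m}"] conjI)
    show "finite {..<m}" by simp
    show "w0 \<subseteq>\<^sub>m w" by (rule sub)
    show "dom w = dom w0 \<union> (\<Union>i\<in>{..<m}. sdom (t i))" by (rule domw)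
    show "\<forall>i\<in>{..<m}. restrict (\<lambda>k. the (w k)) (sdom (t i)) \<in> sval (t i)"
    proof
      fix i assume "i \<in> {..<m}"
      thus "restrict (\<lambda>k. the (w k)) (sdom (t i)) \<in> sval (t i)"
        using restr[of i] vsel_in[of t i, OF tK[of i]] by simp
    qed
    have "strict_mono (\<lambda>i. i + m)" by (rule strict_monoI) simp
    moreover have "range (\<lambda>i. i + m) = UNIV - {..<m}"
    proof (rule set_eqI)
      fix x show "x \<in> range (\<lambda>i. i + m) \<longleftrightarrow> x \<in> UNIV - {..<m}"
        by (auto intro: image_eqI[of _ _ "x - m"])
    qed
    moreover have "s = t \<circ> (\<lambda>i. i + m)" unfolding s_def by (simp add: o_def)
    ultimately show "\<exists>f. strict_mono f \<and> range f = UNIV - {..<m} \<and> s = t \<circ> f" by blast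
  qed
  have scond: "is_cond H K (w, s)"
  proof (rule condI)
    show "finite (dom w)" unfolding domw using condD(1)[OF c] cre_dom[OF tK] by blast
    show "\<forall>i\<in>dom w. the (w i) \<in> H i"
    proof
      fix k assume k: "k \<in> dom w"
      show "the (w k) \<in> H k"
      proof (cases "\<exists>i<m. k \<in> sdom (t i)")
        case True
        then obtain i where i: "i < m" "k \<in> sdom (t i)" by blast
        have "vsel t i k \<in> H k" using vP[of i] i(2) by (rule PiE_mem)
        thus ?thesis using wdec[OF i] by simp
      next
        case False
        hence "k \<in> dom w0" "w k = w0 k" using k wold[OF False] by (auto simp: domIff)
        thus ?thesis using condD(2)[OF c] by simp
      qed
    qed
    show "\<forall>i. s i \<in> K" unfolding s_def using tK by blast
    show "\<forall>i. dom w \<inter> sdom (s i) = {}"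
    proof
      fix i
      have "\<forall>i'\<in>{..<m}. sdom (t i') \<inter> sdom (t (i + m)) = {}" using tdj by simp
      thus "dom w \<inter> sdom (s i) = {}" unfolding domw s_def using tw by blast
    qed
    show "\<forall>i j. i \<noteq> j \<longrightarrow> sdom (s i) \<inter> sdom (s j) = {}" unfolding s_def using tdj by simp
    show "dom w \<union> (\<Union>i. sdom (s i)) = UNIV"
    proof (rule set_eqI)
      fix x
      have "x \<in> dom w0 \<or> (\<exists>i. x \<in> sdom (t i))" using cond_cover[OF c] by blast
      moreover have "\<And>i. x \<in> sdom (t i) \<Longrightarrow> x \<in> dom w \<union> (\<Union>i. sdom (s i))"
      proof -
        fix i assume xi: "x \<in> sdom (t i)"
        show "x \<in> dom w \<union> (\<Union>i. sdom (s i))"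
        proof (cases "i < m")
          case True thus ?thesis unfolding domw using xi by blast
        next
          case False
          hence "x \<in> sdom (s (i - m))" unfolding s_def using xi by simp
          thus ?thesis by blast
        qed
      qed
      ultimately show "x \<in> dom w \<union> (\<Union>i. sdom (s i)) \<longleftrightarrow> x \<in> UNIV" unfolding domw by blast
    qed
    show "\<forall>i. snor (s i) \<noteq> \<infinity>" unfolding s_def using condD(7)[OF c] by blast
    show "\<forall>R. finite {i. snor (s i) \<le> ereal R}"
    proof
      fix R
      have "{i. snor (s i) \<le> ereal R} = (\<lambda>i. i + m) -` {i. snor (t i) \<le> ereal R}" unfolding s_def by auto
      moreover have "inj (\<lambda>i::nat. i + m)" by (auto intro: injI)
      ultimately show "finite {i. snor (s i) \<le> ereal R}"
        using finite_vimageI condD(8)[OF c] by metis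
    qed
  qed
  show ?thesis unfolding op_step_def using c scond dstep big by blast
qed

lemma ab_exists:
  fixes n :: nat and S :: "nat \<Rightarrow> nat \<Rightarrow> ('a, 'd) screature"
  assumes c: "\<forall>j\<le>n. is_cond H K (w, S j)"
  shows "\<exists>a b. b 0 = 0 \<and> (\<forall>k. b k < a k \<and> a k < b (Suc k)) \<and>
    (\<forall>j\<le>n. (\<forall>k i. Min (sdom (S j i)) < b (Suc k) \<longrightarrow> Max (sdom (S j i)) < a (Suc k)) \<and>
       (\<forall>k. \<exists>i. b k \<le> Min (sdom (S j i)) \<and> Max (sdom (S j i)) < a k) \<and>
       (\<forall>k. \<exists>i. a k \<le> Min (sdom (S j i)) \<and> Max (sdom (S j i)) < b (Suc k)))"
proof -
  define F where "F = (\<lambda>x. {x} \<union> (\<Union>j\<in>{..n}. (\<lambda>i. Max (sdom (S j i))) ` {i. Min (sdom (S j i)) < x})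
     \<union> (\<lambda>j. Max (sdom (S j (SOME i. x \<le> Min (sdom (S j i)))))) ` {..n})"
  define nxt where "nxt = (\<lambda>x. Suc (Max (F x)))"
  have f1: "\<And>j. j \<le> n \<Longrightarrow> finite {i. Min (sdom (S j i)) < x}" for x
    using cond_mn_fin c by blast
  have Ffin: "finite (F x)" for x
  proof -
    have "finite (\<Union>j\<in>{..n}. (\<lambda>i. Max (sdom (S j i))) ` {i. Min (sdom (S j i)) < x})"
      by (rule finite_UN_I[OF finite_atMost]) (use f1 in auto)
    thus ?thesis unfolding F_def by simp
  qed
  have Fle: "y \<in> F x \<Longrightarrow> y < nxt x" for x y
    unfolding nxt_def using Max_ge[OF Ffin] le_imp_less_Suc by blast
  have Pa: "x < nxt x" for x using Fle unfolding F_def by blast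
  have Pb: "\<And>j i. j \<le> n \<Longrightarrow> Min (sdom (S j i)) < x \<Longrightarrow> Max (sdom (S j i)) < nxt x" for x
    using Fle unfolding F_def by blast
  have Pc: "\<And>j. j \<le> n \<Longrightarrow> \<exists>i. x \<le> Min (sdom (S j i)) \<and> Max (sdom (S j i)) < nxt x" for x
  proof -
    fix j assume j: "j \<le> n"
    define i where "i = (SOME i. x \<le> Min (sdom (S j i)))"
    have "x \<le> Min (sdom (S j i))" unfolding i_def using cond_mn_ex c j by (meson someI_ex)
    moreover have "Max (sdom (S j i)) < nxt x" using Fle j unfolding F_def i_def by blast
    ultimately show "\<exists>i. x \<le> Min (sdom (S j i)) \<and> Max (sdom (S j i)) < nxt x" by blast
  qed
  define b where "b = rec_nat 0 (\<lambda>_ y. nxt (nxt y))"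
  define a where "a = (\<lambda>k. nxt (b k))"
  have b0: "b 0 = 0" unfolding b_def by simp
  have bS: "b (Suc k) = nxt (a k)" for k unfolding b_def a_def by simp
  have o1: "\<forall>k. b k < a k \<and> a k < b (Suc k)"
  proof
    fix k
    have "b k < a k" unfolding a_def by (rule Pa)
    moreover have "a k < b (Suc k)" unfolding bS by (rule Pa)
    ultimately show "b k < a k \<and> a k < b (Suc k)" ..
  qed
  have o2: "\<forall>j\<le>n. (\<forall>k i. Min (sdom (S j i)) < b (Suc k) \<longrightarrow> Max (sdom (S j i)) < a (Suc k)) \<and>
       (\<forall>k. \<exists>i. b k \<le> Min (sdom (S j i)) \<and> Max (sdom (S j i)) < a k) \<and>
       (\<forall>k. \<exists>i. a k \<le> Min (sdom (S j i)) \<and> Max (sdom (S j i)) < b (Suc k))"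
  proof (intro allI impI)
    fix j assume j: "j \<le> n"
    have A1: "\<forall>k i. Min (sdom (S j i)) < b (Suc k) \<longrightarrow> Max (sdom (S j i)) < a (Suc k)"
      unfolding a_def using Pb[OF j] by blast
    have A2: "\<forall>k. \<exists>i. b k \<le> Min (sdom (S j i)) \<and> Max (sdom (S j i)) < a k"
      unfolding a_def using Pc[OF j] by blast
    have A3: "\<forall>k. \<exists>i. a k \<le> Min (sdom (S j i)) \<and> Max (sdom (S j i)) < b (Suc k)"
      unfolding bS using Pc[OF j] by blast
    show "(\<forall>k i. Min (sdom (S j i)) < b (Suc k) \<longrightarrow> Max (sdom (S j i)) < a (Suc k)) \<and>
       (\<forall>k. \<exists>i. b k \<le> Min (sdom (S j i)) \<and> Max (sdom (S j i)) < a k) \<and>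
       (\<forall>k. \<exists>i. a k \<le> Min (sdom (S j i)) \<and> Max (sdom (S j i)) < b (Suc k))"
      using A1 A2 A3 by blast
  qed
  show ?thesis using b0 o1 o2 by blast
qed

end

lemma countable_W:
  assumes "\<forall>i. countable (H i)"
  shows "countable {w :: nat \<rightharpoonup> 'a. finite (dom w) \<and> (\<forall>i\<in>dom w. the (w i) \<in> H i)}"
proof -
  define C where "C = (UNIV :: nat set) \<times> (\<Union>i. H i)"
  have cC: "countable C" unfolding C_def using assms by auto
  have "{w :: nat \<rightharpoonup> 'a. finite (dom w) \<and> (\<forall>i\<in>dom w. the (w i) \<in> H i)} \<subseteq> map_of ` lists C"
  proof
    fix w :: "nat \<rightharpoonup> 'a" assume "w \<in> {w. finite (dom w) \<and> (\<forall>i\<in>dom w. the (w i) \<in> H i)}"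
    hence fw: "finite (dom w)" and hw: "\<forall>i\<in>dom w. the (w i) \<in> H i" by auto
    define xs where "xs = map (\<lambda>k. (k, the (w k))) (sorted_list_of_set (dom w))"
    have "map_of xs = (Some \<circ> (\<lambda>k. the (w k))) |` dom w"
      unfolding xs_def map_of_map_restrict using fw by simp
    also have "\<dots> = w"
    proof (rule ext)
      fix k show "((Some \<circ> (\<lambda>k. the (w k))) |` dom w) k = w k"
        by (cases "w k") (auto simp: restrict_map_def)
    qed
    finally have "map_of xs = w" .
    moreover have "xs \<in> lists C"
    proof -
      have "\<And>k y. w k = Some y \<Longrightarrow> y \<in> (\<Union>i. H i)"
      proof -
        fix k y assume wy: "w k = Some y"
        hence "k \<in> dom w" by blast
        hence "the (w k) \<in> H k" using hw by blast
        thus "y \<in> (\<Union>i. H i)" using wy by auto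
      qed
      thus ?thesis unfolding xs_def C_def using fw by auto
    qed
    ultimately show "w \<in> map_of ` lists C" by blast
  qed
  moreover have "countable (map_of ` lists C)" using cC by simp
  ultimately show ?thesis by (rule countable_subset)
qed

context ctx begin

lemma chain_ex:
  assumes "is_cond H K (w, s)" "\<forall>i. ereal N < snor (s i)" "N > 3" "b 0 = 0"
    "\<forall>k. b k < a k \<and> a k < b (Suc k)"
    "\<forall>k i. Min (sdom (s i)) < b (Suc k) \<longrightarrow> Max (sdom (s i)) < a (Suc k)"
    "\<forall>k. \<exists>i. b k \<le> Min (sdom (s i)) \<and> Max (sdom (s i)) < a k"
    "\<forall>k. \<exists>i. a k \<le> Min (sdom (s i)) \<and> Max (sdom (s i)) < b (Suc k)"
  shows "\<exists>u. Q_le H K Sig Sigb (w, s) (w, u) \<and> is_cond H K (w, u) \<and>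
   (\<forall>k. sdom (u k) = Dblk w a k) \<and> (\<forall>k. ereal (N - 3) \<le> snor (u k))"
proof -
  interpret chn H K Sig Sigb w s a b N
    by unfold_locales (use assms in auto)
  show ?thesis using chain_main by blast
qed

end

theorem theorem2p4:
  fixes H :: "nat \<Rightarrow> 'a set"
    and K :: "('a, 'd) screature set"
    and Sig :: "('a, 'd) screature set \<Rightarrow> ('a, 'd) screature set"
    and Sigb :: "('a, 'd) screature \<Rightarrow> ('a, 'd) screature set set"
  assumes "\<exists>code :: 'd \<Rightarrow> nat set. inj code"
    and "\<forall>i. countable (H i) \<and> (\<exists>x\<in>H i. \<exists>y\<in>H i. x \<noteq> y)"
    and "semi_creating_triple H K Sig Sigb"
    and "linked_triple K Sig"
    and "semi_gluing K Sig"
    and "cutting_property K Sigb"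
  shows "sigma_star_linked (Q_conds H K) (Q_le H K Sig Sigb)"
proof -
  have Hne: "\<And>i. H i \<noteq> {}" using assms(2) by blast
  have Hc: "\<forall>i. countable (H i)" using assms(2) by blast
  interpret ctx H K Sig Sigb
    using Hne assms(3-6) by unfold_locales auto
  show ?thesis unfolding sigma_star_linked_def
  proof
    fix n :: nat
    define N where "N = real n + 5"
    define W where "W = {w :: nat \<rightharpoonup> 'a. finite (dom w) \<and> (\<forall>i\<in>dom w. the (w i) \<in> H i)}"
    have cW: "countable W" unfolding W_def using countable_W[OF Hc] .
    define col where "col = (\<lambda>p :: ('a, 'd) qcond. decmap (fst p) (snd p) (mcut N (snd p)))"
    define c where "c = (\<lambda>p. if is_cond H K p then to_nat_on W (col p) else 0)"
    show "\<exists>c :: ('a, 'd) qcond \<Rightarrow> nat. \<forall>q. (\<forall>j\<le>n. q j \<in> Q_conds H K \<and> c (q j) = c (q 0)) \<longrightarrow>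
            (\<exists>r\<in>Q_conds H K. \<forall>j\<le>n. Q_le H K Sig Sigb (q j) r)"
    proof (intro exI[of _ c] allI impI)
      fix q :: "nat \<Rightarrow> ('a, 'd) qcond"
      assume hq: "\<forall>j\<le>n. q j \<in> Q_conds H K \<and> c (q j) = c (q 0)"
      have qc: "\<And>j. j \<le> n \<Longrightarrow> is_cond H K (q j)" using hq unfolding Q_conds_def by blast
      have qc': "\<And>j. j \<le> n \<Longrightarrow> is_cond H K (fst (q j), snd (q j))" using qc by simp
      define S where "S = (\<lambda>j i. snd (q j) (i + mcut N (snd (q j))))"
      have dec: "\<And>j. j \<le> n \<Longrightarrow> op_step H K Sig Sigb (q j) (col (q j), S j) \<and>
                   is_cond H K (col (q j), S j) \<and> (\<forall>i. ereal N < snor (S j i))"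
      proof -
        fix j assume j: "j \<le> n"
        have "op_step H K Sig Sigb (fst (q j), snd (q j)) (col (q j), S j) \<and>
                   is_cond H K (col (q j), S j) \<and> (\<forall>i. ereal N < snor (S j i))"
          using decide[OF qc'[OF j], of N] unfolding col_def S_def by simp
        thus "op_step H K Sig Sigb (q j) (col (q j), S j) \<and>
                   is_cond H K (col (q j), S j) \<and> (\<forall>i. ereal N < snor (S j i))" by simp
      qed
      have colW: "\<And>j. j \<le> n \<Longrightarrow> col (q j) \<in> W"
      proof -
        fix j assume j: "j \<le> n"
        have "is_cond H K (col (q j), S j)" using dec[OF j] by blast
        thus "col (q j) \<in> W" unfolding W_def using condD(1,2) by blast
      qed
      define w where "w = col (q 0)"
      have coleq: "\<And>j. j \<le> n \<Longrightarrow> col (q j) = w"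
      proof -
        fix j assume j: "j \<le> n"
        have "c (q j) = c (q 0)" using hq j by blast
        hence "to_nat_on W (col (q j)) = to_nat_on W (col (q 0))"
          unfolding c_def using qc[OF j] qc[of 0] by simp
        thus "col (q j) = w" unfolding w_def
          using inj_on_to_nat_on[OF cW] colW[OF j] colW[of 0] by (simp add: inj_on_eq_iff)
      qed
      have dec': "\<And>j. j \<le> n \<Longrightarrow> op_step H K Sig Sigb (q j) (w, S j) \<and>
                   is_cond H K (w, S j) \<and> (\<forall>i. ereal N < snor (S j i))"
        using dec coleq by metis
      have Sc: "\<forall>j\<le>n. is_cond H K (w, S j)" using dec' by blast
      obtain a b where ab: "b 0 = 0" "\<forall>k. b k < a k \<and> a k < b (Suc k)"
        "\<forall>j\<le>n. (\<forall>k i. Min (sdom (S j i)) < b (Suc k) \<longrightarrow> Max (sdom (S j i)) < a (Suc k)) \<and>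
       (\<forall>k. \<exists>i. b k \<le> Min (sdom (S j i)) \<and> Max (sdom (S j i)) < a k) \<and>
       (\<forall>k. \<exists>i. a k \<le> Min (sdom (S j i)) \<and> Max (sdom (S j i)) < b (Suc k))"
        using ab_exists[OF Sc] by blast
      have N3: "N > 3" unfolding N_def by simp
      have "\<forall>j. \<exists>u. j \<le> n \<longrightarrow> (Q_le H K Sig Sigb (w, S j) (w, u) \<and> is_cond H K (w, u) \<and>
         (\<forall>k. sdom (u k) = Dblk w a k) \<and> (\<forall>k. ereal (N - 3) \<le> snor (u k)))"
      proof
        fix j
        show "\<exists>u. j \<le> n \<longrightarrow> (Q_le H K Sig Sigb (w, S j) (w, u) \<and> is_cond H K (w, u) \<and>
         (\<forall>k. sdom (u k) = Dblk w a k) \<and> (\<forall>k. ereal (N - 3) \<le> snor (u k)))"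
        proof (cases "j \<le> n")
          case True
          have P: "(\<forall>k i. Min (sdom (S j i)) < b (Suc k) \<longrightarrow> Max (sdom (S j i)) < a (Suc k))"
            "(\<forall>k. \<exists>i. b k \<le> Min (sdom (S j i)) \<and> Max (sdom (S j i)) < a k)"
            "(\<forall>k. \<exists>i. a k \<le> Min (sdom (S j i)) \<and> Max (sdom (S j i)) < b (Suc k))"
            using ab(3) True by blast+
          have "is_cond H K (w, S j)" "\<forall>i. ereal N < snor (S j i)" using dec'[OF True] by blast+
          from chain_ex[OF this N3 ab(1) ab(2) P] show ?thesis by blast
        qed simp
      qed
      then obtain U where U: "\<And>j. j \<le> n \<Longrightarrow> Q_le H K Sig Sigb (w, S j) (w, U j) \<and> is_cond H K (w, U j) \<and>
         (\<forall>k. sdom (U j k) = Dblk w a k) \<and> (\<forall>k. ereal (N - 3) \<le> snor (U j k))"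
        using choice[of "\<lambda>j u. j \<le> n \<longrightarrow> (Q_le H K Sig Sigb (w, S j) (w, u) \<and> is_cond H K (w, u) \<and>
         (\<forall>k. sdom (u k) = Dblk w a k) \<and> (\<forall>k. ereal (N - 3) \<le> snor (u k)))"] by blast
      have UK: "\<And>j k. j \<le> n \<Longrightarrow> U j k \<in> K" using U condD(3) by blast
      have "\<forall>k. \<exists>r\<in>K. sdom r = Dblk w a k \<and> (\<forall>j\<le>n. r \<in> Sig {U j k}) \<and>
         (\<forall>R. (\<forall>j\<le>n. ereal R \<le> snor (U j k)) \<longrightarrow> ereal (R - real n) \<le> snor r)"
      proof
        fix k
        have "\<forall>j\<le>n. U j k \<in> K \<and> sdom (U j k) = Dblk w a k \<and> ereal (N - 3) \<le> snor (U j k)"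
          using U UK by blast
        moreover have "N - 3 > real n + 1" unfolding N_def by simp
        ultimately show "\<exists>r\<in>K. sdom r = Dblk w a k \<and> (\<forall>j\<le>n. r \<in> Sig {U j k}) \<and>
         (\<forall>R. (\<forall>j\<le>n. ereal R \<le> snor (U j k)) \<longrightarrow> ereal (R - real n) \<le> snor r)"
          by (rule link)
      qed
      then obtain r where r: "\<And>k. r k \<in> K" "\<And>k. sdom (r k) = Dblk w a k"
        "\<And>k j. j \<le> n \<Longrightarrow> r k \<in> Sig {U j k}"
        "\<And>k R. (\<forall>j\<le>n. ereal R \<le> snor (U j k)) \<Longrightarrow> ereal (R - real n) \<le> snor (r k)"
        by metis
      have U0: "is_cond H K (w, U 0)" "\<And>k. sdom (U 0 k) = Dblk w a k" using U[of 0] by auto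
      have rd: "\<And>k. sdom (r k) = sdom (U 0 k)" using r(2) U0(2) by simp
      have rc: "is_cond H K (w, r)"
      proof (rule condI)
        show "finite (dom w)" using condD(1)[OF U0(1)] .
        show "\<forall>i\<in>dom w. the (w i) \<in> H i" using condD(2)[OF U0(1)] .
        show "\<forall>i. r i \<in> K" using r(1) by blast
        show "\<forall>i. dom w \<inter> sdom (r i) = {}" unfolding rd using condD(4)[OF U0(1)] .
        show "\<forall>i j. i \<noteq> j \<longrightarrow> sdom (r i) \<inter> sdom (r j) = {}" unfolding rd using condD(5)[OF U0(1)] .
        show "dom w \<union> (\<Union>i. sdom (r i)) = UNIV" unfolding rd using condD(6)[OF U0(1)] .
        show "\<forall>i. snor (r i) \<noteq> \<infinity>"
        proof
          fix k
          have "U 0 k \<in> K" using UK by simp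
          moreover have "snor (U 0 k) \<noteq> \<infinity>" using condD(7)[OF U0(1)] by blast
          ultimately show "snor (r k) \<noteq> \<infinity>"
            using comp_finite[of "{U 0 k}" "r k" "U 0 k"] r(3)[of 0 k] by simp
        qed
        show "\<forall>R. finite {i. snor (r i) \<le> ereal R}"
        proof
          fix R
          have "{k. snor (r k) \<le> ereal R} \<subseteq> (\<Union>j\<in>{..n}. {k. snor (U j k) \<le> ereal (R + real n + 1)})"
          proof
            fix k assume k: "k \<in> {k. snor (r k) \<le> ereal R}"
            show "k \<in> (\<Union>j\<in>{..n}. {k. snor (U j k) \<le> ereal (R + real n + 1)})"
            proof (rule ccontr)
              assume "k \<notin> (\<Union>j\<in>{..n}. {k. snor (U j k) \<le> ereal (R + real n + 1)})"
              hence "\<forall>j\<le>n. \<not> snor (U j k) \<le> ereal (R + real n + 1)" by auto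
              hence "\<forall>j\<le>n. ereal (R + real n + 1) \<le> snor (U j k)" by (auto simp: not_le intro: less_imp_le)
              hence "ereal (R + real n + 1 - real n) \<le> snor (r k)" by (rule r(4))
              moreover have "snor (r k) \<le> ereal R" using k by simp
              ultimately have "ereal (R + real n + 1 - real n) \<le> ereal R" by (rule order_trans)
              thus False by simp
            qed
          qed
          moreover have "finite (\<Union>j\<in>{..n}. {k. snor (U j k) \<le> ereal (R + real n + 1)})"
          proof (rule finite_UN_I[OF finite_atMost])
            fix j assume "j \<in> {..n}"
            hence "is_cond H K (w, U j)" using U by simp
            thus "finite {k. snor (U j k) \<le> ereal (R + real n + 1)}" using condD(8) by blast
          qed
          ultimately show "finite {k. snor (r k) \<le> ereal R}" by (rule finite_subset)
        qed
      qed
      have last: "\<And>j. j \<le> n \<Longrightarrow> op_step H K Sig Sigb (w, U j) (w, r)"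
      proof -
        fix j assume j: "j \<le> n"
        have "\<exists>A :: nat \<Rightarrow> nat set. (\<forall>i. finite (A i)) \<and>
          (\<forall>i i'. i \<noteq> i' \<longrightarrow> A i \<inter> A i' = {}) \<and> (\<forall>i. r i \<in> Sig (U j ` A i))"
          using r(3)[OF j] by (intro exI[of _ "\<lambda>i. {i}"]) simp
        hence "sigma_step Sig (w, U j) (w, r)" unfolding sigma_step_def by simp
        thus "op_step H K Sig Sigb (w, U j) (w, r)" unfolding op_step_def using U[OF j] rc by blast
      qed
      show "\<exists>r\<in>Q_conds H K. \<forall>j\<le>n. Q_le H K Sig Sigb (q j) r"
      proof (intro bexI[of _ "(w, r)"] allI impI)
        show "(w, r) \<in> Q_conds H K" unfolding Q_conds_def using rc by simp
        fix j assume j: "j \<le> n"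
        have s1: "op_step H K Sig Sigb (q j) (w, S j)" using dec'[OF j] by blast
        have s2: "(op_step H K Sig Sigb)\<^sup>*\<^sup>* (w, S j) (w, U j)" using U[OF j] unfolding Q_le_def by blast
        have "(op_step H K Sig Sigb)\<^sup>*\<^sup>* (q j) (w, r)"
          using converse_rtranclp_into_rtranclp[OF s1 rtranclp.rtrancl_into_rtrancl[OF s2 last[OF j]]] .
        thus "Q_le H K Sig Sigb (q j) (w, r)" unfolding Q_le_def using qc[OF j] by blast
      qed
    qed
  qed
qed

end
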